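(* Let $F$ be an $h$-flipclass of $\mathfrak S_n$, let $E=E(F)$ and $m=|E|$. Then: (1) the set $F'=\{r_E(\Gamma):\Gamma\in F\}$ is an $h$-flipclass of $\mathfrak S_m$, and $r_E$ is a flips-preserving bijection from $F$ to $F'$ satisfying $r_E(l_i(\Gamma))=l_i(r_E(\Gamma))$ for all $\Gamma\in F$ and $i\in[h]$, where $l_i(\Delta)$ is the $i$-th label of a path $\Delta$; (2) $r_E$ induces an isomorphism of edge-labelled directed graphs from $S_F$ to $S_{F'}$ and from $TS_F$ to $TS_{F'}$, with labels also matched by $r_E$; (3) for any reflection ordering $\preceq$ of the transpositions of $\mathfrak S_n$, the increasing paths (w.r.t. $\preceq$) of $F$, $S_F$, $TS_F$ correspond under $r_E$ to the increasing paths (w.r.t. $\preceq_{r_E}$) of $F'$, $S_{F'}$, $TS_{F'}$, respectively; (4) $r_E$ induces an isomorphism from $F$ to $F'$.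
   Context: $\mathfrak S_n$ is the symmetric group on $[n]$, $T$ its transpositions, $\ell$ the length w.r.t. simple transpositions. The Bruhat graph $B(\mathfrak S_n)$ has an edge $x\xrightarrow{t}y$ iff $yx^{-1}=t\in T$ and $\ell(x)<\ell(y)$; $P_h(u,v)$ is the set of paths $u=x_0\to\cdots\to x_h=v$ of length $h$. Between two fixed vertices there are $0$ or $2$ paths of length $2$, each the flip of the other; the $i$-th flip operator $f_i$ ($i\in[h-1]$) replaces $x_{i-1}\to x_i\to x_{i+1}$ by its flip; an $h$-flipclass of $\mathfrak S_n$ is an orbit of $\langle f_1,\dots,f_{h-1}\rangle$ on some $P_h(u,v)$. For a path $\Gamma$ with labels $t_1,\dots,t_h$, let $M(\Gamma)=\{a\in[n]:t_i(a)\neq a \text{ for some } i\}$; $E(F)$ is $M(\Gamma)$ for any $\Gamma\in F$ (independent of $\Gamma$). For $E\subseteq[n]$ with $|E|=m$, $r_E:E\to[m]$ is the unique order-preserving bijection; for $w\in\mathfrak S_n$, $r_E(w)\in\mathfrak S_m$ is the permutation whose one-line notation is obtained from that of $w$ by deleting entries not in $E$ and applying $r_E$ to the remaining entries; for a path $\Gamma$ all of whose labels are transpositions $(a,b)$ with $a,b\in E$, $r_E(\Gamma)$ is the path in $B(\mathfrak S_m)$ obtained by applying $r_E$ to its vertices and labels ($r_E((a,b))=(r_E(a),r_E(b))$). For a total order $\preceq$ on transpositions of $\mathfrak S_n$, $\preceq_{r_E}$ is the total order on transpositions of $\mathfrak S_m$ with $(a,b)\preceq_{r_E}(c,d)$ iff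 $(r_E^{-1}(a),r_E^{-1}(b))\preceq(r_E^{-1}(c),r_E^{-1}(d))$. For a flipclass $F$: $S_F$ is the edge-labelled subgraph of $B(\mathfrak S_n)$ of vertices and edges lying on paths of $F$; $TS_F$ has vertices $(a,i)$ such that some path $(x_0,\dots,x_h)\in F$ has $x_i=a$, and edges $(a,i)\xrightarrow{t}(b,i+1)$ whenever some path of $F$ contains $x_i=a\xrightarrow{t}b=x_{i+1}$. A reflection ordering is a total order $\preceq$ on $T$ with, for $a<b<c$, either $(a,b)\preceq(a,c)\preceq(b,c)$ or $(b,c)\preceq(a,c)\preceq(a,b)$; a path with labels $t_1,\dots,t_h$ is increasing if $t_1\preceq\cdots\preceq t_h$. Isomorphism of flipclasses: for an $h$-flipclass $F$ of $\mathfrak S_n$ and $F'$ of $\mathfrak S_m$, a pair $(f,g)$ with $f$ a bijection from the permutations occurring on paths of $F$ onto those of $F'$ inducing (vertexwise) a bijection $F\to F'$ commuting with flip operators, $g$ a bijection from the labels of paths of $F$ onto those of $F'$ such that a path with labels $(t_1,\dots,t_h)$ goes to one with labels $(g(t_1),\dots,g(t_h))$, and $g$ order-preserving for the lexicographic orders of transpositions ($(a,b)<(c,d)$, $a<b$, $c<d$, iff $a<c$, or $a=c$ and $b<d$). *)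

theory Defs
  imports Main
begin

text \<open>A permutation of [n] is represented by its one-line notation w(1)...w(n), a list.\<close>
definition perm_n :: "nat \<Rightarrow> nat list \<Rightarrow> bool" where
  "perm_n n w \<longleftrightarrow> distinct w \<and> set w = {1..n}"

definition len :: "nat list \<Rightarrow> nat" where
  "len w = card {(i, j). i < j \<and> j < length w \<and> w ! i > w ! j}"

definition transp_set :: "nat \<Rightarrow> (nat \<times> nat) set" where
  "transp_set n = {(a, b). 1 \<le> a \<and> a < b \<and> b \<le> n}"

definition swapv :: "nat \<times> nat \<Rightarrow> nat \<Rightarrow> nat" where
  "swapv t x = (if x = fst t then snd t else if x = snd t then fst t else x)"

text \<open>Left multiplication t x: acts on the values of the one-line notation.\<close>
definition tmul :: "nat \<times> nat \<Rightarrow> nat list \<Rightarrow> nat list" where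
  "tmul t w = map (swapv t) w"

definition bedge :: "nat \<Rightarrow> nat list \<Rightarrow> nat \<times> nat \<Rightarrow> nat list \<Rightarrow> bool" where
  "bedge n x t y \<longleftrightarrow> perm_n n x \<and> t \<in> transp_set n \<and> y = tmul t x \<and> len x < len y"

text \<open>A path is a pair (vertex list x_0..x_h, label list t_1..t_h); ts ! (i-1) is the i-th label.\<close>
type_synonym bpath = "nat list list \<times> (nat \<times> nat) list"

definition bpaths :: "nat \<Rightarrow> nat \<Rightarrow> nat list \<Rightarrow> nat list \<Rightarrow> bpath set" where
  "bpaths n h u v = {(xs, ts). length ts = h \<and> length xs = Suc h \<and> hd xs = u \<and> last xs = v \<and>
      (\<forall>x\<in>set xs. perm_n n x) \<and> (\<forall>i<h. bedge n (xs ! i) (ts ! i) (xs ! Suc i))}"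

text \<open>The i-th flip operator: replace x_{i-1} -> x_i -> x_{i+1} by the other length-2 path.\<close>
definition flip :: "nat \<Rightarrow> nat \<Rightarrow> bpath \<Rightarrow> bpath" where
  "flip n i p = (THE q. \<exists>y t1 t2. q = ((fst p)[i := y], (snd p)[i - 1 := t1, i := t2]) \<and>
      y \<noteq> fst p ! i \<and> bedge n (fst p ! (i - 1)) t1 y \<and> bedge n y t2 (fst p ! Suc i))"

definition flipstep :: "nat \<Rightarrow> nat \<Rightarrow> nat list \<Rightarrow> nat list \<Rightarrow> (bpath \<times> bpath) set" where
  "flipstep n h u v = {(p, q). p \<in> bpaths n h u v \<and> q \<in> bpaths n h u v \<and>
      (\<exists>i\<in>{1..h - 1}. q = flip n i p \<or> p = flip n i q)}"

text \<open>h-flipclass: an orbit of the group generated by f_1..f_{h-1} on some P_h(u,v).\<close>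
definition is_flipclass :: "nat \<Rightarrow> nat \<Rightarrow> bpath set \<Rightarrow> bool" where
  "is_flipclass n h F \<longleftrightarrow> (\<exists>u v p. p \<in> bpaths n h u v \<and> F = {q. (p, q) \<in> (flipstep n h u v)\<^sup>*})"

definition moved :: "bpath \<Rightarrow> nat set" where
  "moved p = {a. \<exists>i<length (snd p). swapv (snd p ! i) a \<noteq> a}"

definition Eset :: "bpath set \<Rightarrow> nat set" where
  "Eset F = moved (SOME p. p \<in> F)"

definition rk :: "nat set \<Rightarrow> nat \<Rightarrow> nat" where
  "rk E a = Suc (card {x \<in> E. x < a})"

definition rk_inv :: "nat set \<Rightarrow> nat \<Rightarrow> nat" where
  "rk_inv E k = sorted_list_of_set E ! (k - 1)"

definition rperm :: "nat set \<Rightarrow> nat list \<Rightarrow> nat list" where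
  "rperm E w = map (rk E) (filter (\<lambda>x. x \<in> E) w)"

definition rtr :: "nat set \<Rightarrow> nat \<times> nat \<Rightarrow> nat \<times> nat" where
  "rtr E t = (rk E (fst t), rk E (snd t))"

definition rtr_inv :: "nat set \<Rightarrow> nat \<times> nat \<Rightarrow> nat \<times> nat" where
  "rtr_inv E t = (rk_inv E (fst t), rk_inv E (snd t))"

definition rpath :: "nat set \<Rightarrow> bpath \<Rightarrow> bpath" where
  "rpath E p = (map (rperm E) (fst p), map (rtr E) (snd p))"

definition SV :: "bpath set \<Rightarrow> nat list set" where
  "SV F = (\<Union>p\<in>F. set (fst p))"

definition SE :: "bpath set \<Rightarrow> (nat list \<times> (nat \<times> nat) \<times> nat list) set" where
  "SE F = {(fst p ! i, snd p ! i, fst p ! Suc i) | p i. p \<in> F \<and> i < length (snd p)}"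

definition TSV :: "bpath set \<Rightarrow> (nat list \<times> nat) set" where
  "TSV F = {(fst p ! i, i) | p i. p \<in> F \<and> i \<le> length (snd p)}"

definition TSE :: "bpath set \<Rightarrow> ((nat list \<times> nat) \<times> (nat \<times> nat) \<times> (nat list \<times> nat)) set" where
  "TSE F = {((fst p ! i, i), snd p ! i, (fst p ! Suc i, Suc i)) | p i. p \<in> F \<and> i < length (snd p)}"

definition emap :: "('v \<Rightarrow> 'w) \<Rightarrow> ('l \<Rightarrow> 'k) \<Rightarrow> 'v \<times> 'l \<times> 'v \<Rightarrow> 'w \<times> 'k \<times> 'w" where
  "emap f g e = (f (fst e), g (fst (snd e)), f (snd (snd e)))"

definition elabels :: "('v \<times> 'l \<times> 'v) set \<Rightarrow> 'l set" where
  "elabels Es = {t. \<exists>x y. (x, t, y) \<in> Es}"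

definition lg_iso :: "'v set \<Rightarrow> ('v \<times> 'l \<times> 'v) set \<Rightarrow> 'w set \<Rightarrow> ('w \<times> 'k \<times> 'w) set
    \<Rightarrow> ('v \<Rightarrow> 'w) \<Rightarrow> ('l \<Rightarrow> 'k) \<Rightarrow> bool" where
  "lg_iso V Es V' Es' f g \<longleftrightarrow> bij_betw f V V' \<and> bij_betw g (elabels Es) (elabels Es') \<and>
     bij_betw (emap f g) Es Es'"

definition lpaths :: "'v set \<Rightarrow> ('v \<times> 'l \<times> 'v) set \<Rightarrow> ('v list \<times> 'l list) set" where
  "lpaths V Es = {(xs, ts). length xs = Suc (length ts) \<and> set xs \<subseteq> V \<and>
      (\<forall>i<length ts. (xs ! i, ts ! i, xs ! Suc i) \<in> Es)}"

definition pmap :: "('v \<Rightarrow> 'w) \<Rightarrow> ('l \<Rightarrow> 'k) \<Rightarrow> 'v list \<times> 'l list \<Rightarrow> 'w list \<times> 'k list" where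
  "pmap f g p = (map f (fst p), map g (snd p))"

definition reflection_ordering :: "nat \<Rightarrow> ((nat \<times> nat) \<times> (nat \<times> nat)) set \<Rightarrow> bool" where
  "reflection_ordering n R \<longleftrightarrow> linear_order_on (transp_set n) R \<and>
     (\<forall>a b c. 1 \<le> a \<and> a < b \<and> b < c \<and> c \<le> n \<longrightarrow>
        (((a, b), (a, c)) \<in> R \<and> ((a, c), (b, c)) \<in> R) \<or>
        (((b, c), (a, c)) \<in> R \<and> ((a, c), (a, b)) \<in> R))"

definition rorder :: "nat set \<Rightarrow> ((nat \<times> nat) \<times> (nat \<times> nat)) set \<Rightarrow> ((nat \<times> nat) \<times> (nat \<times> nat)) set" where
  "rorder E R = {(s, t). s \<in> transp_set (card E) \<and> t \<in> transp_set (card E) \<and>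
      (rtr_inv E s, rtr_inv E t) \<in> R}"

definition increasing :: "('l \<times> 'l) set \<Rightarrow> 'l list \<Rightarrow> bool" where
  "increasing R ts \<longleftrightarrow> (\<forall>i. Suc i < length ts \<longrightarrow> (ts ! i, ts ! Suc i) \<in> R)"

definition tlex :: "nat \<times> nat \<Rightarrow> nat \<times> nat \<Rightarrow> bool" where
  "tlex s t \<longleftrightarrow> fst s < fst t \<or> (fst s = fst t \<and> snd s < snd t)"

definition fverts :: "bpath set \<Rightarrow> nat list set" where
  "fverts F = (\<Union>p\<in>F. set (fst p))"

definition flabels :: "bpath set \<Rightarrow> (nat \<times> nat) set" where
  "flabels F = (\<Union>p\<in>F. set (snd p))"

definition flip_iso :: "nat \<Rightarrow> nat \<Rightarrow> nat \<Rightarrow> bpath set \<Rightarrow> bpath set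
    \<Rightarrow> (nat list \<Rightarrow> nat list) \<Rightarrow> (nat \<times> nat \<Rightarrow> nat \<times> nat) \<Rightarrow> bool" where
  "flip_iso n m h F F' f g \<longleftrightarrow>
     bij_betw f (fverts F) (fverts F') \<and>
     bij_betw g (flabels F) (flabels F') \<and>
     bij_betw (pmap f g) F F' \<and>
     (\<forall>p\<in>F. \<forall>i\<in>{1..h - 1}. pmap f g (flip n i p) = flip m i (pmap f g p)) \<and>
     (\<forall>s\<in>flabels F. \<forall>t\<in>flabels F. tlex s t \<longrightarrow> tlex (g s) (g t))"

end

theory Submission
  imports Defs
begin


lemma swapv_invol[simp]: "swapv t (swapv t v) = v"
  unfolding swapv_def by auto

fun idx :: "'a list \<Rightarrow> 'a \<Rightarrow> nat" where
  "idx [] a = 0"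
| "idx (c#x) a = (if c = a then 0 else Suc (idx x a))"

lemma idx_lt: "a \<in> set x \<Longrightarrow> idx x a < length x"
  by (induction x) auto

lemma nth_idx: "a \<in> set x \<Longrightarrow> x ! idx x a = a"
  by (induction x) auto

lemma idx_nth: "distinct x \<Longrightarrow> i < length x \<Longrightarrow> idx x (x ! i) = i"
proof (induction x arbitrary: i)
  case Nil then show ?case by simp
next
  case (Cons c x) then show ?case
    by (cases i) (auto simp: nth_mem)
qed

lemma idx_inj: "a \<in> set x \<Longrightarrow> b \<in> set x \<Longrightarrow> idx x a = idx x b \<Longrightarrow> a = b"
  by (metis nth_idx)

lemma idx_map_inj: "inj_on f (set x) \<Longrightarrow> a \<in> set x \<Longrightarrow> idx (map f x) (f a) = idx x a"
proof (induction x)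
  case Nil then show ?case by simp
next
  case (Cons c x)
  show ?case
  proof (cases "c = a")
    case True then show ?thesis by simp
  next
    case False
    hence "f c \<noteq> f a" using Cons.prems by (auto simp: inj_on_def)
    moreover have "a \<in> set x" using Cons.prems False by auto
    ultimately show ?thesis using Cons by auto
  qed
qed

lemma idx_map_invol: assumes "\<And>v. f (f v) = v" shows "idx (map f x) v = idx x (f v)"
proof (induction x)
  case Nil then show ?case by simp
next
  case (Cons c x)
  have "(f c = v) = (c = f v)" by (metis assms)
  then show ?case using Cons by simp
qed

lemma idx_tmul: "idx (tmul t x) v = idx x (swapv t v)"
  unfolding tmul_def by (rule idx_map_invol) (simp add: swapv_def)

lemma idx_filter: "a \<in> set x \<Longrightarrow> b \<in> set x \<Longrightarrow> P a \<Longrightarrow> P b \<Longrightarrow> idx x a < idx x b \<Longrightarrow>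
   idx (filter P x) a < idx (filter P x) b"
proof (induction x)
  case Nil then show ?case by simp
next
  case (Cons c x)
  show ?case
  proof (cases "c = a")
    case True
    then show ?thesis using Cons.prems by auto
  next
    case False
    hence ca: "c \<noteq> a" .
    show ?thesis
    proof (cases "c = b")
      case True then show ?thesis using Cons.prems ca by auto
    next
      case False
      have "a \<in> set x" "b \<in> set x" using Cons.prems ca False by auto
      moreover have "idx x a < idx x b" using Cons.prems ca False by auto
      ultimately have "idx (filter P x) a < idx (filter P x) b" using Cons by auto
      then show ?thesis using ca False by auto
    qed
  qed
qed

lemma idx_order_iff:
  assumes "distinct x" "a \<in> set x" "b \<in> set x" "a \<noteq> b"
  shows "idx x a < idx x b \<longleftrightarrow> \<not> idx x b < idx x a"
proof -
  have "idx x a \<noteq> idx x b" using idx_inj[OF assms(2,3)] assms(4) by blast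
  thus ?thesis by auto
qed

definition Inv :: "nat list \<Rightarrow> (nat \<times> nat) set" where
  "Inv w = {(i, j). i < j \<and> j < length w \<and> w ! i > w ! j}"

lemma len_Inv: "len w = card (Inv w)"
  unfolding len_def Inv_def by simp

lemma finite_Inv: "finite (Inv w)"
proof -
  have "Inv w \<subseteq> {..<length w} \<times> {..<length w}" unfolding Inv_def by auto
  thus ?thesis by (rule finite_subset) auto
qed

lemma lenA_main:
  assumes dx: "distinct x" and pq: "p < q" "q < length x" and ab: "x ! p < x ! q"
  shows "len x < len (map (swapv (x ! p, x ! q)) x)"
proof -
  define a where "a = x ! p"
  define b where "b = x ! q"
  define y where "y = map (swapv (a, b)) x"
  define \<sigma> where "\<sigma> = swapv (p, q)"
  have ly: "length y = length x" unfolding y_def by simp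
  have xa: "\<And>i. i < length x \<Longrightarrow> x ! i = a \<longleftrightarrow> i = p"
    using dx pq unfolding a_def by (auto simp: nth_eq_iff_index_eq)
  have xb: "\<And>i. i < length x \<Longrightarrow> x ! i = b \<longleftrightarrow> i = q"
    using dx pq unfolding b_def by (auto simp: nth_eq_iff_index_eq)
  have sl: "\<And>i. i < length x \<Longrightarrow> \<sigma> i < length x" using pq unfolding \<sigma>_def swapv_def by auto
  have ss: "\<And>i. \<sigma> (\<sigma> i) = i" unfolding \<sigma>_def swapv_def by auto
  have yn: "\<And>i. i < length x \<Longrightarrow> y ! i = x ! (\<sigma> i)"
  proof -
    fix i assume i: "i < length x"
    show "y ! i = x ! (\<sigma> i)"
    proof (cases "i = p \<or> i = q")
      case True then show ?thesis using i pq unfolding y_def \<sigma>_def swapv_def a_def b_def by auto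
    next
      case False then show ?thesis using i xa xb unfolding y_def \<sigma>_def swapv_def by auto
    qed
  qed
  define g where "g = (\<lambda>(i,j). if \<sigma> i < \<sigma> j then (\<sigma> i, \<sigma> j) else (i, j))"
  have img: "g ` Inv x \<subseteq> Inv y - {(p,q)}"
  proof
    fix z assume "z \<in> g ` Inv x"
    then obtain i j where ij: "(i,j) \<in> Inv x" and z: "z = g (i,j)" by auto
    have i: "i < j" "j < length x" "x ! i > x ! j" using ij unfolding Inv_def by auto
    show "z \<in> Inv y - {(p,q)}"
    proof (cases "\<sigma> i < \<sigma> j")
      case True
      have "y ! (\<sigma> i) = x ! i" "y ! (\<sigma> j) = x ! j" using yn sl i ss by (metis less_trans)+
      moreover have "(\<sigma> i, \<sigma> j) \<noteq> (p, q)"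
      proof
        assume "(\<sigma> i, \<sigma> j) = (p, q)"
        hence "i = \<sigma> p" "j = \<sigma> q" using ss by (metis prod.inject)+
        moreover have "\<sigma> p = q" "\<sigma> q = p" unfolding \<sigma>_def swapv_def by auto
        ultimately show False using i(1) pq(1) by auto
      qed
      ultimately show ?thesis using True z i sl ly unfolding g_def Inv_def by auto
    next
      case False
      have ab': "a < b" using ab unfolding a_def b_def .
      have ji: "i < length x" using i by auto
      have "y ! i > y ! j \<and> (i,j) \<noteq> (p,q)"
      proof -
        have "i = p \<and> j \<noteq> q \<and> j < q \<or> j = q \<and> i \<noteq> p \<and> p < i"
          using False i(1) i(3) ab pq(1) unfolding \<sigma>_def swapv_def by (auto split: if_splits)
        thus ?thesis
        proof
          assume h: "i = p \<and> j \<noteq> q \<and> j < q"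
          hence "j \<noteq> p" using i by auto
          hence "y ! j = x ! j" using yn i h unfolding \<sigma>_def swapv_def by auto
          moreover have "y ! i = b" using yn ji h unfolding \<sigma>_def swapv_def b_def by auto
          ultimately show ?thesis using i h ab' unfolding a_def by auto
        next
          assume h: "j = q \<and> i \<noteq> p \<and> p < i"
          hence "i \<noteq> q" using i by auto
          hence "y ! i = x ! i" using yn ji h unfolding \<sigma>_def swapv_def by auto
          moreover have "y ! j = a" using yn i h pq unfolding \<sigma>_def swapv_def a_def by auto
          ultimately show ?thesis using i h ab' unfolding b_def by auto
        qed
      qed
      then show ?thesis using False z i ly unfolding g_def Inv_def by auto
    qed
  qed
  have inj: "inj_on g (Inv x)"
  proof (rule inj_onI)
    fix u v assume u: "u \<in> Inv x" and v: "v \<in> Inv x" and e: "g u = g v"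
    obtain i j where uij: "u = (i,j)" by (cases u)
    obtain i' j' where vij: "v = (i',j')" by (cases v)
    have "i < j" "i' < j'" using u v uij vij unfolding Inv_def by auto
    then show "u = v" using e ss unfolding uij vij g_def
      by (auto split: if_splits) (metis)+
  qed
  have pqy: "(p,q) \<in> Inv y"
  proof -
    have "y ! p = b" "y ! q = a" using yn pq unfolding \<sigma>_def swapv_def a_def b_def by auto
    thus ?thesis using pq ly ab unfolding Inv_def a_def b_def by auto
  qed
  have "card (Inv x) = card (g ` Inv x)" using card_image[OF inj] by simp
  also have "\<dots> \<le> card (Inv y - {(p,q)})" using img finite_Inv by (intro card_mono) auto
  also have "\<dots> < card (Inv y)" using pqy finite_Inv[of y] by (metis card_Diff1_less)
  finally show ?thesis unfolding len_Inv y_def a_def b_def .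
qed

lemma lenA:
  assumes dx: "distinct x" and a: "a \<in> set x" and b: "b \<in> set x" and ab: "a < b"
  shows "len x < len (tmul (a,b) x) \<longleftrightarrow> idx x a < idx x b"
proof
  assume "idx x a < idx x b"
  moreover have "x ! idx x a = a" "x ! idx x b = b" using a b by (auto simp: nth_idx)
  ultimately show "len x < len (tmul (a,b) x)"
    using lenA_main[OF dx, of "idx x a" "idx x b"] idx_lt[OF b] ab unfolding tmul_def by auto
next
  assume l: "len x < len (tmul (a,b) x)"
  show "idx x a < idx x b"
  proof (rule ccontr)
    assume "\<not> idx x a < idx x b"
    hence lt: "idx x b < idx x a" using idx_order_iff[OF dx a b] ab by auto
    define y where "y = tmul (a,b) x"
    have dy: "distinct y" using dx unfolding y_def tmul_def
      by (simp add: distinct_map inj_on_def) (metis swapv_def)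
    have ya: "y ! idx x b = a" "y ! idx x a = b" using a b unfolding y_def tmul_def
      by (auto simp: nth_idx idx_lt swapv_def)
    have "len y < len (map (swapv (y ! idx x b, y ! idx x a)) y)"
      using lenA_main[OF dy lt] idx_lt[OF a] ya ab unfolding y_def tmul_def by auto
    moreover have "map (swapv (y ! idx x b, y ! idx x a)) y = x"
      by (subst ya(1), subst ya(2)) (simp add: y_def tmul_def comp_def)
    ultimately show False using l unfolding y_def by auto
  qed
qed



lemma pi_nontriv:
  fixes a b c d :: nat
  assumes "a<b" "c<d" "(a,b) \<noteq> (c,d)"
   "swapv (c,d) (swapv (a,b) a) = a" "swapv (c,d) (swapv (a,b) b) = b"
  shows False
  using assms by (auto simp: swapv_def split: if_splits)

lemma G1e:
  fixes a b c d e f g h :: nat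
  assumes "a<b" "c<d" "e<f" "g<h" "(a,b) \<noteq> (c,d)"
  and eq: "\<forall>v. swapv (g,h) (swapv (e,f) v) = swapv (c,d) (swapv (a,b) v)"
  shows "e \<in> {a,b,c,d}"
proof (rule ccontr)
  assume n: "e \<notin> {a,b,c,d}"
  have "swapv (g,h) f = e" using eq[rule_format, of e] n by (simp add: swapv_def)
  hence "g = e \<and> h = f" using assms(3,4) by (auto simp: swapv_def split: if_splits)
  hence "swapv (c,d) (swapv (a,b) a) = a" "swapv (c,d) (swapv (a,b) b) = b"
    using eq[rule_format, of a] eq[rule_format, of b] by auto
  thus False using pi_nontriv assms(1,2,5) by blast
qed

lemma G1f:
  fixes a b c d e f g h :: nat
  assumes "a<b" "c<d" "e<f" "g<h" "(a,b) \<noteq> (c,d)"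
  and eq: "\<forall>v. swapv (g,h) (swapv (e,f) v) = swapv (c,d) (swapv (a,b) v)"
  shows "f \<in> {a,b,c,d}"
proof (rule ccontr)
  assume n: "f \<notin> {a,b,c,d}"
  have "swapv (g,h) e = f" using eq[rule_format, of f] n assms(3) by (simp add: swapv_def)
  hence "g = e \<and> h = f" using assms(3,4) by (auto simp: swapv_def split: if_splits)
  hence "swapv (c,d) (swapv (a,b) a) = a" "swapv (c,d) (swapv (a,b) b) = b"
    using eq[rule_format, of a] eq[rule_format, of b] by auto
  thus False using pi_nontriv assms(1,2,5) by blast
qed

lemma G1_inv:
  assumes "\<forall>v. swapv s' (swapv s v) = swapv t2 (swapv t1 v)"
  shows "\<forall>v. swapv s (swapv s' v) = swapv t1 (swapv t2 v)"
proof
  fix v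
  have "swapv s' (swapv s (swapv t1 (swapv t2 v))) = v" using assms by simp
  hence "swapv s (swapv s' v) = swapv s (swapv s' (swapv s' (swapv s (swapv t1 (swapv t2 v)))))" by simp
  thus "swapv s (swapv s' v) = swapv t1 (swapv t2 v)" by simp
qed

lemma G1:
  fixes a b c d e f g h :: nat
  assumes "a<b" "c<d" "e<f" "g<h" "(a,b) \<noteq> (c,d)"
  and "\<forall>v. swapv (g,h) (swapv (e,f) v) = swapv (c,d) (swapv (a,b) v)"
  shows "e \<in> {a,b,c,d} \<and> f \<in> {a,b,c,d} \<and> g \<in> {a,b,c,d} \<and> h \<in> {a,b,c,d}"
proof -
  have i: "\<forall>v. swapv (e,f) (swapv (g,h) v) = swapv (a,b) (swapv (c,d) v)" using G1_inv[OF assms(6)] .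
  have "g \<in> {c,d,a,b}" using G1e[OF assms(2,1,4,3) _ i] assms(5) by auto
  moreover have "h \<in> {c,d,a,b}" using G1f[OF assms(2,1,4,3) _ i] assms(5) by auto
  ultimately show ?thesis using G1e[OF assms] G1f[OF assms] by auto
qed


definition L1 :: "nat \<Rightarrow> nat \<Rightarrow> nat \<Rightarrow> ((nat\<times>nat)\<times>(nat\<times>nat)) list" where
  "L1 p q r = [((p,q),(p,r)), ((p,r),(q,r)), ((q,r),(p,q))]"
definition L2 :: "nat \<Rightarrow> nat \<Rightarrow> nat \<Rightarrow> ((nat\<times>nat)\<times>(nat\<times>nat)) list" where
  "L2 p q r = [((p,q),(q,r)), ((p,r),(p,q)), ((q,r),(p,r))]"

definition valid :: "(nat \<Rightarrow> nat) \<Rightarrow> nat\<times>nat \<Rightarrow> nat\<times>nat \<Rightarrow> bool" where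
  "valid P s s' \<longleftrightarrow> P (fst s) < P (snd s) \<and> P (swapv s (fst s')) < P (swapv s (snd s'))"

lemma ne3: fixes p q r :: nat assumes "p<q" "q<r"
  shows "p \<noteq> q" "q \<noteq> r" "p \<noteq> r" "q \<noteq> p" "r \<noteq> q" "r \<noteq> p" "\<not> q < p" "\<not> r < q" "\<not> r < p" "p < r"
   "\<not> p < p" "\<not> q < q" "\<not> r < r"
  using assms by auto

lemma L1_pi:
  fixes p q r :: nat assumes "p<q" "q<r" "(t1,t2) \<in> set (L1 p q r)"
  shows "swapv t2 (swapv t1 p) = q \<and> swapv t2 (swapv t1 q) = r \<and> swapv t2 (swapv t1 r) = p"
  using assms(3) unfolding L1_def
  by (simp only: set_simps insert_iff empty_iff prod.inject) (elim disjE conjE; simp add: ne3[OF assms(1,2)] swapv_def)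

lemma L2_pi:
  fixes p q r :: nat assumes "p<q" "q<r" "(t1,t2) \<in> set (L2 p q r)"
  shows "swapv t2 (swapv t1 p) = r \<and> swapv t2 (swapv t1 q) = p \<and> swapv t2 (swapv t1 r) = q"
  using assms(3) unfolding L2_def
  by (simp only: set_simps insert_iff empty_iff prod.inject) (elim disjE conjE; simp add: ne3[OF assms(1,2)] swapv_def)

lemma L1_fact:
  fixes p q r e f g h :: nat assumes "p<q" "q<r" "e<f" "g<h" "e \<in> {p,q,r}" "f \<in> {p,q,r}" "g \<in> {p,q,r}" "h \<in> {p,q,r}"
  "swapv (g,h) (swapv (e,f) p) = q" "swapv (g,h) (swapv (e,f) q) = r" "swapv (g,h) (swapv (e,f) r) = p"
  shows "((e,f),(g,h)) \<in> set (L1 p q r)"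
  using assms(3-) unfolding L1_def
  by (simp only: insert_iff empty_iff simp_thms) (elim disjE; simp add: ne3[OF assms(1,2)] swapv_def)

lemma L2_fact:
  fixes p q r e f g h :: nat assumes "p<q" "q<r" "e<f" "g<h" "e \<in> {p,q,r}" "f \<in> {p,q,r}" "g \<in> {p,q,r}" "h \<in> {p,q,r}"
  "swapv (g,h) (swapv (e,f) p) = r" "swapv (g,h) (swapv (e,f) q) = p" "swapv (g,h) (swapv (e,f) r) = q"
  shows "((e,f),(g,h)) \<in> set (L2 p q r)"
  using assms(3-) unfolding L2_def
  by (simp only: insert_iff empty_iff simp_thms) (elim disjE; simp add: ne3[OF assms(1,2)] swapv_def)

lemma L1_ex:
  fixes p q r :: nat assumes "p<q" "q<r" "P p \<noteq> P q" "P q \<noteq> P r" "P p \<noteq> P r"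
   "(t1,t2) \<in> set (L1 p q r)" "valid P t1 t2"
  shows "\<exists>x\<in>set (L1 p q r). fst x \<noteq> t1 \<and> valid P (fst x) (snd x)"
proof -
  have ne: "p \<noteq> q" "q \<noteq> r" "p \<noteq> r" "q \<noteq> p" "r \<noteq> q" "r \<noteq> p" using assms(1,2) by auto
  show ?thesis using assms(3-) unfolding L1_def
    by (simp only: set_simps insert_iff empty_iff prod.inject) (elim disjE conjE; simp add: ne3[OF assms(1,2)] swapv_def valid_def; arith)
qed

lemma L2_ex:
  fixes p q r :: nat assumes "p<q" "q<r" "P p \<noteq> P q" "P q \<noteq> P r" "P p \<noteq> P r"
   "(t1,t2) \<in> set (L2 p q r)" "valid P t1 t2"
  shows "\<exists>x\<in>set (L2 p q r). fst x \<noteq> t1 \<and> valid P (fst x) (snd x)"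
proof -
  have ne: "p \<noteq> q" "q \<noteq> r" "p \<noteq> r" "q \<noteq> p" "r \<noteq> q" "r \<noteq> p" using assms(1,2) by auto
  show ?thesis using assms(3-) unfolding L2_def
    by (simp only: set_simps insert_iff empty_iff prod.inject) (elim disjE conjE; simp add: ne3[OF assms(1,2)] swapv_def valid_def; arith)
qed

lemma L1_un:
  fixes p q r :: nat assumes "p<q" "q<r" "P p \<noteq> P q" "P q \<noteq> P r" "P p \<noteq> P r"
   "(t1,t2) \<in> set (L1 p q r)" "valid P t1 t2"
   "(s,s') \<in> set (L1 p q r)" "s \<noteq> t1" "valid P s s'"
   "(s2,s2') \<in> set (L1 p q r)" "s2 \<noteq> t1" "valid P s2 s2'"
  shows "s = s2"
proof -
  have ne: "p \<noteq> q" "q \<noteq> r" "p \<noteq> r" "q \<noteq> p" "r \<noteq> q" "r \<noteq> p" using assms(1,2) by auto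
  show ?thesis using assms(3-) unfolding L1_def
    by (simp only: set_simps insert_iff empty_iff prod.inject) (elim disjE conjE; simp add: ne3[OF assms(1,2)] swapv_def valid_def; linarith?)
qed

lemma L2_un:
  fixes p q r :: nat assumes "p<q" "q<r" "P p \<noteq> P q" "P q \<noteq> P r" "P p \<noteq> P r"
   "(t1,t2) \<in> set (L2 p q r)" "valid P t1 t2"
   "(s,s') \<in> set (L2 p q r)" "s \<noteq> t1" "valid P s s'"
   "(s2,s2') \<in> set (L2 p q r)" "s2 \<noteq> t1" "valid P s2 s2'"
  shows "s = s2"
proof -
  have ne: "p \<noteq> q" "q \<noteq> r" "p \<noteq> r" "q \<noteq> p" "r \<noteq> q" "r \<noteq> p" using assms(1,2) by auto
  show ?thesis using assms(3-) unfolding L2_def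
    by (simp only: set_simps insert_iff empty_iff prod.inject) (elim disjE conjE; simp add: ne3[OF assms(1,2)] swapv_def valid_def; linarith?)
qed


lemma disj_fact:
  fixes a b c d e f g h :: nat
  assumes "a<b" "c<d" "a\<noteq>c" "a\<noteq>d" "b\<noteq>c" "b\<noteq>d"
   "e<f" "g<h" "e \<in> {a,b,c,d}" "f \<in> {a,b,c,d}" "g \<in> {a,b,c,d}" "h \<in> {a,b,c,d}"
   "swapv (g,h) (swapv (e,f) a) = swapv (c,d) (swapv (a,b) a)"
   "swapv (g,h) (swapv (e,f) b) = swapv (c,d) (swapv (a,b) b)"
   "swapv (g,h) (swapv (e,f) c) = swapv (c,d) (swapv (a,b) c)"
   "swapv (g,h) (swapv (e,f) d) = swapv (c,d) (swapv (a,b) d)"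
  shows "(e,f) = (a,b) \<and> (g,h) = (c,d) \<or> (e,f) = (c,d) \<and> (g,h) = (a,b)"
proof -
  have ne: "a\<noteq>b" "b\<noteq>a" "c\<noteq>a" "d\<noteq>a" "c\<noteq>b" "d\<noteq>b" "c\<noteq>d" "d\<noteq>c" "\<not> b<a" "\<not> d<c" "\<not> a<a" "\<not> b<b" "\<not> c<c" "\<not> d<d"
    using assms(1-6) by auto
  show ?thesis using assms(7-)
    by (simp only: insert_iff empty_iff simp_thms) (elim disjE; simp add: ne assms(3-6) swapv_def)
qed

definition cyc1 :: "nat \<Rightarrow> nat \<Rightarrow> nat \<Rightarrow> nat \<Rightarrow> nat" where
  "cyc1 p q r v = (if v = p then q else if v = q then r else if v = r then p else v)"
definition cyc2 :: "nat \<Rightarrow> nat \<Rightarrow> nat \<Rightarrow> nat \<Rightarrow> nat" where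
  "cyc2 p q r v = (if v = p then r else if v = q then p else if v = r then q else v)"

lemma L1_cyc:
  fixes p q r :: nat assumes "p<q" "q<r" "(t1,t2) \<in> set (L1 p q r)"
  shows "swapv t2 (swapv t1 v) = cyc1 p q r v"
  using assms(3) unfolding L1_def
  by (simp only: set_simps insert_iff empty_iff prod.inject) (elim disjE conjE; simp add: ne3[OF assms(1,2)] swapv_def cyc1_def)

lemma L2_cyc:
  fixes p q r :: nat assumes "p<q" "q<r" "(t1,t2) \<in> set (L2 p q r)"
  shows "swapv t2 (swapv t1 v) = cyc2 p q r v"
  using assms(3) unfolding L2_def
  by (simp only: set_simps insert_iff empty_iff prod.inject) (elim disjE conjE; simp add: ne3[OF assms(1,2)] swapv_def cyc2_def)

lemma L1_letters: "(s,s') \<in> set (L1 p q r) \<Longrightarrow> {fst s, snd s, fst s', snd s'} \<subseteq> {p,q,r}"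
  unfolding L1_def by auto
lemma L2_letters: "(s,s') \<in> set (L2 p q r) \<Longrightarrow> {fst s, snd s, fst s', snd s'} \<subseteq> {p,q,r}"
  unfolding L2_def by auto
lemma L1_ord: "p<q \<Longrightarrow> q<r \<Longrightarrow> (s,s') \<in> set (L1 p q r) \<Longrightarrow> fst s < snd s \<and> fst s' < snd s'"
  unfolding L1_def by auto
lemma L2_ord: "p<q \<Longrightarrow> q<r \<Longrightarrow> (s,s') \<in> set (L2 p q r) \<Longrightarrow> fst s < snd s \<and> fst s' < snd s'"
  unfolding L2_def by auto

lemma share_glue:
  fixes a b c d :: nat
  assumes "a<b" "c<d" "(a,b) \<noteq> (c,d)" "\<not> (a\<noteq>c \<and> a\<noteq>d \<and> b\<noteq>c \<and> b\<noteq>d)"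
  shows "\<exists>p q r. p<q \<and> q<r \<and> {a,b,c,d} = {p,q,r} \<and>
     (((a,b),(c,d)) \<in> set (L1 p q r) \<or> ((a,b),(c,d)) \<in> set (L2 p q r))"
proof -
  consider "a = c" "b < d" | "a = c" "d < b" | "a = d" | "b = c" | "b = d" "a < c" | "b = d" "c < a"
    using assms by (metis linorder_neqE_nat)
  then show ?thesis
  proof cases
    case 1 then show ?thesis using assms by (intro exI[of _ a] exI[of _ b] exI[of _ d]) (auto simp: L1_def)
  next
    case 2 then show ?thesis using assms by (intro exI[of _ a] exI[of _ d] exI[of _ b]) (auto simp: L2_def)
  next
    case 3 then show ?thesis using assms by (intro exI[of _ c] exI[of _ a] exI[of _ b]) (auto simp: L1_def)
  next
    case 4 then show ?thesis using assms by (intro exI[of _ a] exI[of _ b] exI[of _ d]) (auto simp: L2_def)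
  next
    case 5 then show ?thesis using assms by (intro exI[of _ a] exI[of _ c] exI[of _ b]) (auto simp: L1_def)
  next
    case 6 then show ?thesis using assms by (intro exI[of _ c] exI[of _ a] exI[of _ b]) (auto simp: L2_def)
  qed
qed

definition fac :: "nat\<times>nat \<Rightarrow> nat\<times>nat \<Rightarrow> nat\<times>nat \<Rightarrow> nat\<times>nat \<Rightarrow> bool" where
  "fac s s' t1 t2 \<longleftrightarrow> (\<forall>v. swapv s' (swapv s v) = swapv t2 (swapv t1 v))"

lemma TP_ex:
  fixes a b c d :: nat and P :: "nat \<Rightarrow> nat"
  assumes "a<b" "c<d" "(a,b) \<noteq> (c,d)" "inj_on P {a,b,c,d}" "valid P (a,b) (c,d)"
  shows "\<exists>s s'. fst s < snd s \<and> fst s' < snd s' \<and> s \<noteq> (a,b) \<and> {fst s, snd s, fst s', snd s'} \<subseteq> {a,b,c,d}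
     \<and> fac s s' (a,b) (c,d) \<and> valid P s s'"
proof (cases "a\<noteq>c \<and> a\<noteq>d \<and> b\<noteq>c \<and> b\<noteq>d")
  case True
  have "fac (c,d) (a,b) (a,b) (c,d)" using True unfolding fac_def swapv_def by auto
  moreover have "valid P (c,d) (a,b)" using assms(5) True unfolding valid_def swapv_def by auto
  ultimately show ?thesis using assms(1-3) by (intro exI[of _ "(c,d)"] exI[of _ "(a,b)"]) auto
next
  case False
  then obtain p q r where pqr: "p<q" "q<r" "{a,b,c,d} = {p,q,r}"
    and L: "((a,b),(c,d)) \<in> set (L1 p q r) \<or> ((a,b),(c,d)) \<in> set (L2 p q r)"
    using share_glue[OF assms(1-3)] by blast
  have Pn: "P p \<noteq> P q" "P q \<noteq> P r" "P p \<noteq> P r" using assms(4) pqr unfolding inj_on_def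
    by (metis insertCI less_irrefl less_trans)+
  from L show ?thesis
  proof
    assume l: "((a,b),(c,d)) \<in> set (L1 p q r)"
    obtain x where x: "x \<in> set (L1 p q r)" "fst x \<noteq> (a,b)" "valid P (fst x) (snd x)"
      using L1_ex[OF pqr(1,2) Pn l assms(5)] by blast
    have "fac (fst x) (snd x) (a,b) (c,d)" unfolding fac_def
      using L1_cyc[OF pqr(1,2) l] L1_cyc[OF pqr(1,2), of "fst x" "snd x"] x(1) by simp
    then show ?thesis using x L1_letters[of "fst x" "snd x"] L1_ord[OF pqr(1,2), of "fst x" "snd x"] pqr(3)
      by (intro exI[of _ "fst x"] exI[of _ "snd x"]) auto
  next
    assume l: "((a,b),(c,d)) \<in> set (L2 p q r)"
    obtain x where x: "x \<in> set (L2 p q r)" "fst x \<noteq> (a,b)" "valid P (fst x) (snd x)"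
      using L2_ex[OF pqr(1,2) Pn l assms(5)] by blast
    have "fac (fst x) (snd x) (a,b) (c,d)" unfolding fac_def
      using L2_cyc[OF pqr(1,2) l] L2_cyc[OF pqr(1,2), of "fst x" "snd x"] x(1) by simp
    then show ?thesis using x L2_letters[of "fst x" "snd x"] L2_ord[OF pqr(1,2), of "fst x" "snd x"] pqr(3)
      by (intro exI[of _ "fst x"] exI[of _ "snd x"]) auto
  qed
qed

lemma TP_supp:
  fixes a b c d e f g h :: nat
  assumes "a<b" "c<d" "(a,b) \<noteq> (c,d)" "e<f" "g<h" "fac (e,f) (g,h) (a,b) (c,d)"
  shows "{e,f,g,h} \<subseteq> {a,b,c,d}"
  using G1[OF assms(1,2,4,5,3)] assms(6) unfolding fac_def by auto

lemma TP_un1: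
  fixes a b c d e f g h e' f' g' h' :: nat and P :: "nat \<Rightarrow> nat"
  assumes "a<b" "c<d" "(a,b) \<noteq> (c,d)" "inj_on P {a,b,c,d}" "valid P (a,b) (c,d)"
   and "e<f" "g<h" "fac (e,f) (g,h) (a,b) (c,d)" "valid P (e,f) (g,h)" "(e,f) \<noteq> (a,b)"
   and "e'<f'" "g'<h'" "fac (e',f') (g',h') (a,b) (c,d)" "valid P (e',f') (g',h')" "(e',f') \<noteq> (a,b)"
  shows "(e,f) = (e',f')"
proof -
  have s1: "{e,f,g,h} \<subseteq> {a,b,c,d}" using TP_supp assms by blast
  have s2: "{e',f',g',h'} \<subseteq> {a,b,c,d}" using TP_supp assms by blast
  have f1: "\<And>v. swapv (g,h) (swapv (e,f) v) = swapv (c,d) (swapv (a,b) v)" using assms(8) unfolding fac_def by auto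
  have f2: "\<And>v. swapv (g',h') (swapv (e',f') v) = swapv (c,d) (swapv (a,b) v)" using assms(13) unfolding fac_def by auto
  show ?thesis
  proof (cases "a\<noteq>c \<and> a\<noteq>d \<and> b\<noteq>c \<and> b\<noteq>d")
    case True
    have "(e,f) = (a,b) \<and> (g,h) = (c,d) \<or> (e,f) = (c,d) \<and> (g,h) = (a,b)"
      using disj_fact[of a b c d e f g h] assms(1,2,6,7) True s1 f1 by auto
    moreover have "(e',f') = (a,b) \<and> (g',h') = (c,d) \<or> (e',f') = (c,d) \<and> (g',h') = (a,b)"
      using disj_fact[of a b c d e' f' g' h'] assms(1,2,11,12) True s2 f2 by auto
    ultimately show ?thesis using assms(10,15) by auto
  next
    case False
    then obtain p q r where pqr: "p<q" "q<r" "{a,b,c,d} = {p,q,r}"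
      and L: "((a,b),(c,d)) \<in> set (L1 p q r) \<or> ((a,b),(c,d)) \<in> set (L2 p q r)"
      using share_glue[OF assms(1-3)] by blast
    have Pn: "P p \<noteq> P q" "P q \<noteq> P r" "P p \<noteq> P r" using assms(4) pqr unfolding inj_on_def
      by (metis insertCI less_irrefl less_trans)+
    have s1': "e \<in> {p,q,r}" "f \<in> {p,q,r}" "g \<in> {p,q,r}" "h \<in> {p,q,r}" using s1 pqr(3) by auto
    have s2': "e' \<in> {p,q,r}" "f' \<in> {p,q,r}" "g' \<in> {p,q,r}" "h' \<in> {p,q,r}" using s2 pqr(3) by auto
    from L show ?thesis
    proof
      assume l: "((a,b),(c,d)) \<in> set (L1 p q r)"
      note c = L1_cyc[OF pqr(1,2) l]
      have m1: "((e,f),(g,h)) \<in> set (L1 p q r)"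
        using L1_fact[OF pqr(1,2) assms(6,7) s1'] f1 c ne3[OF pqr(1,2)] unfolding cyc1_def by simp
      have m2: "((e',f'),(g',h')) \<in> set (L1 p q r)"
        using L1_fact[OF pqr(1,2) assms(11,12) s2'] f2 c ne3[OF pqr(1,2)] unfolding cyc1_def by simp
      show ?thesis using L1_un[OF pqr(1,2) Pn l assms(5) m1 assms(10,9) m2 assms(15,14)] .
    next
      assume l: "((a,b),(c,d)) \<in> set (L2 p q r)"
      note c = L2_cyc[OF pqr(1,2) l]
      have m1: "((e,f),(g,h)) \<in> set (L2 p q r)"
        using L2_fact[OF pqr(1,2) assms(6,7) s1'] f1 c ne3[OF pqr(1,2)] unfolding cyc2_def by simp
      have m2: "((e',f'),(g',h')) \<in> set (L2 p q r)"
        using L2_fact[OF pqr(1,2) assms(11,12) s2'] f2 c ne3[OF pqr(1,2)] unfolding cyc2_def by simp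
      show ?thesis using L2_un[OF pqr(1,2) Pn l assms(5) m1 assms(10,9) m2 assms(15,14)] .
    qed
  qed
qed


definition lset :: "nat\<times>nat \<Rightarrow> nat set" where "lset t = {fst t, snd t}"

lemma perm_distinct: "perm_n n x \<Longrightarrow> distinct x" unfolding perm_n_def by auto
lemma perm_set: "perm_n n x \<Longrightarrow> set x = {1..n}" unfolding perm_n_def by auto

lemma transp_letters: "t \<in> transp_set n \<Longrightarrow> fst t \<in> {1..n} \<and> snd t \<in> {1..n} \<and> fst t < snd t"
  unfolding transp_set_def by auto

lemma transp_setI: "1 \<le> fst t \<Longrightarrow> fst t < snd t \<Longrightarrow> snd t \<le> n \<Longrightarrow> t \<in> transp_set n"
  unfolding transp_set_def by (cases t) auto

lemma tmul_perm: assumes "perm_n n x" "t \<in> transp_set n" shows "perm_n n (tmul t x)"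
proof -
  have inj: "inj (swapv t)" by (metis injI swapv_invol)
  have "swapv t ` {1..n} = {1..n}"
  proof
    show "swapv t ` {1..n} \<subseteq> {1..n}" using transp_letters[OF assms(2)] unfolding swapv_def by auto
    show "{1..n} \<subseteq> swapv t ` {1..n}"
    proof
      fix v assume "v \<in> {1..n}"
      moreover have "swapv t v \<in> {1..n}" using calculation transp_letters[OF assms(2)] unfolding swapv_def by auto
      ultimately show "v \<in> swapv t ` {1..n}" by (metis image_eqI swapv_invol)
    qed
  qed
  moreover have "inj_on (swapv t) (set x)" by (meson inj inj_on_subset subset_UNIV)
  ultimately show ?thesis using assms unfolding perm_n_def tmul_def by (auto simp: distinct_map)
qed

lemma bedge_iff:
  "bedge n x t y \<longleftrightarrow> perm_n n x \<and> t \<in> transp_set n \<and> y = tmul t x \<and> idx x (fst t) < idx x (snd t)"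
proof -
  have "perm_n n x \<Longrightarrow> t \<in> transp_set n \<Longrightarrow> len x < len (tmul t x) \<longleftrightarrow> idx x (fst t) < idx x (snd t)"
    using lenA[of x "fst t" "snd t"] transp_letters[of t n] perm_set[of n x] perm_distinct[of n x] by auto
  then show ?thesis unfolding bedge_def by auto
qed

lemma tmul_tmul: "tmul s (tmul t x) = map (\<lambda>v. swapv s (swapv t v)) x"
  unfolding tmul_def by simp

lemma swapv_out: "v \<noteq> fst t \<Longrightarrow> v \<noteq> snd t \<Longrightarrow> swapv t v = v"
  unfolding swapv_def by auto

lemma map_eq_fac:
  assumes "perm_n n x" "s \<in> transp_set n" "s' \<in> transp_set n" "t1 \<in> transp_set n" "t2 \<in> transp_set n"
  shows "tmul s' (tmul s x) = tmul t2 (tmul t1 x) \<longleftrightarrow> fac s s' t1 t2"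
proof
  assume h: "tmul s' (tmul s x) = tmul t2 (tmul t1 x)"
  show "fac s s' t1 t2" unfolding fac_def
  proof
    fix v
    show "swapv s' (swapv s v) = swapv t2 (swapv t1 v)"
    proof (cases "v \<in> {1..n}")
      case True
      then obtain i where "i < length x" "x ! i = v" using perm_set[OF assms(1)] by (metis in_set_conv_nth)
      then show ?thesis using h unfolding tmul_tmul by (metis nth_map)
    next
      case False
      then show ?thesis using transp_letters[OF assms(2)] transp_letters[OF assms(3)] transp_letters[OF assms(4)]
        transp_letters[OF assms(5)] by (metis swapv_out)
    qed
  qed
next
  assume "fac s s' t1 t2" then show "tmul s' (tmul s x) = tmul t2 (tmul t1 x)"
    unfolding fac_def tmul_tmul by simp
qed

lemma tmul_inj:
  assumes "perm_n n x" "s \<in> transp_set n" "t \<in> transp_set n" "tmul s x = tmul t x"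
  shows "s = t"
proof -
  have "fst s \<in> set x" using transp_letters[OF assms(2)] perm_set[OF assms(1)] by auto
  then obtain i where i: "i < length x" "x ! i = fst s" by (metis in_set_conv_nth)
  have e1: "swapv s (fst s) = swapv t (fst s)" using assms(4) i unfolding tmul_def by (metis nth_map)
  have "snd s \<in> set x" using transp_letters[OF assms(2)] perm_set[OF assms(1)] by auto
  then obtain j where j: "j < length x" "x ! j = snd s" by (metis in_set_conv_nth)
  have e2: "swapv s (snd s) = swapv t (snd s)" using assms(4) j unfolding tmul_def by (metis nth_map)
  obtain a b where s: "s = (a,b)" by (cases s)
  obtain c d where t: "t = (c,d)" by (cases t)
  have "a < b" "c < d" using transp_letters[OF assms(2)] transp_letters[OF assms(3)] s t by auto
  moreover have "b = swapv (c,d) a" using e1 unfolding s t by (simp add: swapv_def)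
  moreover have "a = swapv (c,d) b" using e2 calculation(1) unfolding s t by (simp add: swapv_def)
  ultimately have "a = c \<and> b = d"
  proof -
    assume h: "a < b" "c < d" "b = swapv (c,d) a" "a = swapv (c,d) b"
    consider "a = c" | "a = d" | "a \<noteq> c \<and> a \<noteq> d" by blast
    then show ?thesis
    proof cases
      case 1 then show ?thesis using h(3) by (simp add: swapv_def)
    next
      case 2 then have "b = c" using h(3) by (simp add: swapv_def)
      then show ?thesis using h(1,2) 2 by simp
    next
      case 3 then have "b = a" using h(3) by (simp add: swapv_def)
      then show ?thesis using h(1) by simp
    qed
  qed
  then show ?thesis using s t by simp
qed

lemma valid_idx:
  assumes "perm_n n x" "s \<in> transp_set n" "s' \<in> transp_set n"
  shows "bedge n x s y \<and> bedge n y s' z \<longleftrightarrow> y = tmul s x \<and> z = tmul s' (tmul s x) \<and> valid (idx x) s s'"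
proof -
  have p: "perm_n n (tmul s x)" using tmul_perm assms by auto
  have i1: "idx (tmul s x) (fst s') = idx x (swapv s (fst s'))" "idx (tmul s x) (snd s') = idx x (swapv s (snd s'))"
    by (rule idx_tmul)+
  have "bedge n x s y \<longleftrightarrow> y = tmul s x \<and> idx x (fst s) < idx x (snd s)"
    using assms(1,2) by (simp only: bedge_iff) blast
  moreover have "y = tmul s x \<Longrightarrow> bedge n y s' z \<longleftrightarrow> z = tmul s' (tmul s x) \<and> idx x (swapv s (fst s')) < idx x (swapv s (snd s'))"
    using p assms(3) i1 by (simp only: bedge_iff) metis
  ultimately show ?thesis unfolding valid_def by blast
qed

lemma inj_idx: assumes "perm_n n x" "A \<subseteq> {1..n}" shows "inj_on (idx x) A"
proof (rule inj_onI)
  fix a b assume "a \<in> A" "b \<in> A" "idx x a = idx x b"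
  moreover have "a \<in> set x" "b \<in> set x" using calculation assms perm_set by auto
  ultimately show "a = b" using idx_inj by metis
qed

lemma path_t_ne:
  assumes "bedge n x t1 y" "bedge n y t2 z" shows "t1 \<noteq> t2"
proof
  assume "t1 = t2"
  hence "z = tmul t1 (tmul t1 x)" using assms unfolding bedge_def by simp
  hence "z = x" unfolding tmul_def by (simp add: comp_def)
  moreover have "len x < len y" "len y < len z" using assms unfolding bedge_def by auto
  ultimately show False by simp
qed

lemma two_path_supp:
  assumes "bedge n x t1 y" "bedge n y t2 z" "bedge n x s y'" "bedge n y' s' z"
  shows "lset s \<union> lset s' \<subseteq> lset t1 \<union> lset t2"
proof -
  have px: "perm_n n x" and ts: "t1 \<in> transp_set n" "t2 \<in> transp_set n" "s \<in> transp_set n" "s' \<in> transp_set n"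
    using assms unfolding bedge_def by auto
  have "tmul s' (tmul s x) = tmul t2 (tmul t1 x)" using assms unfolding bedge_def by auto
  hence f: "fac s s' t1 t2" using map_eq_fac[OF px ts(3,4,1,2)] by auto
  have ne: "t1 \<noteq> t2" using path_t_ne assms(1,2) by auto
  obtain a b where t1: "t1 = (a,b)" by (cases t1)
  obtain c d where t2: "t2 = (c,d)" by (cases t2)
  obtain e f where s: "s = (e,f)" by (cases s)
  obtain g h where s': "s' = (g,h)" by (cases s')
  show ?thesis using TP_supp[of a b c d e f g h] f ne transp_letters[OF ts(1)] transp_letters[OF ts(2)]
    transp_letters[OF ts(3)] transp_letters[OF ts(4)] unfolding t1 t2 s s' lset_def by auto
qed

lemma two_path_ex:
  assumes "bedge n x t1 y" "bedge n y t2 z"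
  shows "\<exists>y' s s'. y' \<noteq> y \<and> bedge n x s y' \<and> bedge n y' s' z"
proof -
  have px: "perm_n n x" and ts: "t1 \<in> transp_set n" "t2 \<in> transp_set n"
    using assms unfolding bedge_def by auto
  have ne: "t1 \<noteq> t2" using path_t_ne assms(1,2) by auto
  obtain a b where t1: "t1 = (a,b)" by (cases t1)
  obtain c d where t2: "t2 = (c,d)" by (cases t2)
  have l: "a<b" "c<d" "{a,b,c,d} \<subseteq> {1..n}" using transp_letters[OF ts(1)] transp_letters[OF ts(2)] t1 t2 by auto
  have "valid (idx x) t1 t2" using valid_idx[OF px ts, of y z] assms(1,2) by blast
  hence v: "valid (idx x) (a,b) (c,d)" using t1 t2 by simp
  obtain s s' where ss: "fst s < snd s" "fst s' < snd s'" "s \<noteq> (a,b)" "{fst s, snd s, fst s', snd s'} \<subseteq> {a,b,c,d}"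
     "fac s s' (a,b) (c,d)" "valid (idx x) s s'"
    using TP_ex[OF l(1,2) ne[unfolded t1 t2] inj_idx[OF px l(3)] v] by blast
  have "{fst s, snd s, fst s', snd s'} \<subseteq> {1..n}" using ss(4) l(3) by (rule subset_trans)
  hence "fst s \<in> {1..n}" "snd s \<in> {1..n}" "fst s' \<in> {1..n}" "snd s' \<in> {1..n}" by simp_all
  hence sts: "s \<in> transp_set n" "s' \<in> transp_set n" using ss(1,2) by (auto intro!: transp_setI)
  have zf: "z = tmul t2 (tmul t1 x)" using assms unfolding bedge_def by auto
  have f: "fac s s' t1 t2" using ss(5) t1 t2 by simp
  have "tmul s' (tmul s x) = z" using map_eq_fac[OF px sts ts] f zf by simp
  then have "bedge n x s (tmul s x) \<and> bedge n (tmul s x) s' z" using valid_idx[OF px sts, of "tmul s x" z] ss(6) by simp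
  moreover have "y = tmul t1 x" using assms(1) unfolding bedge_def by simp
  hence "tmul s x \<noteq> y" using tmul_inj[OF px sts(1) ts(1)] ss(3) t1 by auto
  ultimately show ?thesis by blast
qed

lemma two_path_un:
  assumes "bedge n x t1 y" "bedge n y t2 z"
    and "y1 \<noteq> y" "bedge n x s1 y1" "bedge n y1 s1' z"
    and "y2 \<noteq> y" "bedge n x s2 y2" "bedge n y2 s2' z"
  shows "y1 = y2 \<and> s1 = s2 \<and> s1' = s2'"
proof -
  have px: "perm_n n x" and ts: "t1 \<in> transp_set n" "t2 \<in> transp_set n"
    and ss: "s1 \<in> transp_set n" "s1' \<in> transp_set n" "s2 \<in> transp_set n" "s2' \<in> transp_set n"
    using assms unfolding bedge_def by auto
  have ne: "t1 \<noteq> t2" using path_t_ne assms(1,2) by auto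
  obtain a b where t1: "t1 = (a,b)" by (cases t1)
  obtain c d where t2: "t2 = (c,d)" by (cases t2)
  obtain e f where s1: "s1 = (e,f)" by (cases s1)
  obtain g h where s1': "s1' = (g,h)" by (cases s1')
  obtain e' f' where s2: "s2 = (e',f')" by (cases s2)
  obtain g' h' where s2': "s2' = (g',h')" by (cases s2')
  have l: "a<b" "c<d" "{a,b,c,d} \<subseteq> {1..n}" using transp_letters[OF ts(1)] transp_letters[OF ts(2)] t1 t2 by auto
  have "valid (idx x) t1 t2" using valid_idx[OF px ts, of y z] assms(1,2) by blast
  hence v: "valid (idx x) (a,b) (c,d)" using t1 t2 by simp
  have zf: "z = tmul t2 (tmul t1 x)" using assms unfolding bedge_def by auto
  have w1: "y1 = tmul s1 x \<and> z = tmul s1' (tmul s1 x) \<and> valid (idx x) s1 s1'"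
    using valid_idx[OF px ss(1,2), of y1 z] assms(4,5) by blast
  have w2: "y2 = tmul s2 x \<and> z = tmul s2' (tmul s2 x) \<and> valid (idx x) s2 s2'"
    using valid_idx[OF px ss(3,4), of y2 z] assms(7,8) by blast
  have "fac s1 s1' t1 t2" using map_eq_fac[OF px ss(1,2) ts] w1 zf by simp
  hence v1: "valid (idx x) (e,f) (g,h)" "fac (e,f) (g,h) (a,b) (c,d)" using w1 s1 s1' t1 t2 by auto
  have "fac s2 s2' t1 t2" using map_eq_fac[OF px ss(3,4) ts] w2 zf by simp
  hence v2: "valid (idx x) (e',f') (g',h')" "fac (e',f') (g',h') (a,b) (c,d)" using w2 s2 s2' t1 t2 by auto
  have n1: "(e,f) \<noteq> (a,b)" using assms(1,3,4) s1 t1 unfolding bedge_def by auto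
  have n2: "(e',f') \<noteq> (a,b)" using assms(1,6,7) s2 t1 unfolding bedge_def by auto
  have o: "e<f" "g<h" "e'<f'" "g'<h'" using transp_letters[OF ss(1)] transp_letters[OF ss(2)] transp_letters[OF ss(3)] transp_letters[OF ss(4)] s1 s1' s2 s2' by auto
  have "(e,f) = (e',f')"
    using TP_un1[OF l(1,2) ne[unfolded t1 t2] inj_idx[OF px l(3)] v o(1,2) v1(2,1) n1 o(3,4) v2(2,1) n2] .
  hence e: "s1 = s2" using s1 s2 by simp
  hence "y1 = y2" using assms(4,7) unfolding bedge_def by auto
  moreover have "s1' = s2'"
  proof -
    have p1: "perm_n n y1" using tmul_perm[OF px ss(1)] assms(4) unfolding bedge_def by auto
    have "tmul s1' y1 = tmul s2' y1" using assms(5,8) `y1 = y2` unfolding bedge_def by auto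
    thus ?thesis using tmul_inj[OF p1 ss(2,4)] by auto
  qed
  ultimately show ?thesis using e by auto
qed


lemma bpathsD:
  assumes "(xs, ts) \<in> bpaths n h u v"
  shows "length ts = h" "length xs = Suc h" "hd xs = u" "last xs = v" "\<And>x. x \<in> set xs \<Longrightarrow> perm_n n x"
    "\<And>k. k < h \<Longrightarrow> bedge n (xs ! k) (ts ! k) (xs ! Suc k)"
  using assms unfolding bpaths_def by auto

lemma flip_unique:
  assumes p: "(xs, ts) \<in> bpaths n h u v" and i: "1 \<le> i" "i < h"
    and y: "y \<noteq> xs ! i" "bedge n (xs ! (i - 1)) s y" "bedge n y s' (xs ! Suc i)"
  shows "flip n i (xs, ts) = (xs[i := y], ts[i - 1 := s, i := s'])"
proof -
  have e1: "bedge n (xs ! (i - 1)) (ts ! (i - 1)) (xs ! i)" using bpathsD(6)[OF p, of "i - 1"] i by simp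
  have e2: "bedge n (xs ! i) (ts ! i) (xs ! Suc i)" using bpathsD(6)[OF p, of i] i by simp
  show ?thesis unfolding flip_def fst_conv snd_conv
  proof (rule the_equality)
    show "\<exists>y' t1 t2. (xs[i := y], ts[i - 1 := s, i := s']) = (xs[i := y'], ts[i - 1 := t1, i := t2]) \<and>
        y' \<noteq> xs ! i \<and> bedge n (xs ! (i - 1)) t1 y' \<and> bedge n y' t2 (xs ! Suc i)"
      using y by blast
  next
    fix q assume "\<exists>y' t1 t2. q = (xs[i := y'], ts[i - 1 := t1, i := t2]) \<and>
        y' \<noteq> xs ! i \<and> bedge n (xs ! (i - 1)) t1 y' \<and> bedge n y' t2 (xs ! Suc i)"
    then obtain y' t1 t2 where q: "q = (xs[i := y'], ts[i - 1 := t1, i := t2])" "y' \<noteq> xs ! i"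
      "bedge n (xs ! (i - 1)) t1 y'" "bedge n y' t2 (xs ! Suc i)" by blast
    have "y' = y \<and> t1 = s \<and> t2 = s'" using two_path_un[OF e1 e2 q(2,3,4) y] .
    then show "q = (xs[i := y], ts[i - 1 := s, i := s'])" using q(1) by simp
  qed
qed

lemma flip_exists:
  assumes p: "(xs, ts) \<in> bpaths n h u v" and i: "1 \<le> i" "i < h"
  shows "\<exists>y s s'. y \<noteq> xs ! i \<and> bedge n (xs ! (i - 1)) s y \<and> bedge n y s' (xs ! Suc i) \<and>
     flip n i (xs, ts) = (xs[i := y], ts[i - 1 := s, i := s'])"
proof -
  have e1: "bedge n (xs ! (i - 1)) (ts ! (i - 1)) (xs ! i)" using bpathsD(6)[OF p, of "i - 1"] i by simp
  have e2: "bedge n (xs ! i) (ts ! i) (xs ! Suc i)" using bpathsD(6)[OF p, of i] i by simp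
  obtain y s s' where y: "y \<noteq> xs ! i" "bedge n (xs ! (i - 1)) s y" "bedge n y s' (xs ! Suc i)"
    using two_path_ex[OF e1 e2] by blast
  show ?thesis using y flip_unique[OF p i y] by blast
qed

lemma flip_bpaths:
  assumes p: "(xs, ts) \<in> bpaths n h u v" and i: "1 \<le> i" "i < h"
    and y: "y \<noteq> xs ! i" "bedge n (xs ! (i - 1)) s y" "bedge n y s' (xs ! Suc i)"
  shows "(xs[i := y], ts[i - 1 := s, i := s']) \<in> bpaths n h u v"
proof -
  note D = bpathsD[OF p]
  have py: "perm_n n y" using y(2) tmul_perm unfolding bedge_def by auto
  have "hd (xs[i := y]) = u"
  proof -
    have "xs \<noteq> []" using D(2) by auto
    hence "hd (xs[i := y]) = xs[i := y] ! 0" "hd xs = xs ! 0" by (auto simp: hd_conv_nth)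
    thus ?thesis using i D(3) by simp
  qed
  moreover have "last (xs[i := y]) = v"
  proof -
    have "xs \<noteq> []" using D(2) by auto
    hence "last (xs[i := y]) = xs[i := y] ! h" "last xs = xs ! h" using D(2) by (auto simp: last_conv_nth)
    thus ?thesis using i D(4) by simp
  qed
  moreover have "\<forall>x\<in>set (xs[i := y]). perm_n n x"
  proof
    fix x assume "x \<in> set (xs[i := y])"
    hence "x \<in> insert y (set xs)" using set_update_subset_insert by fast
    thus "perm_n n x" using D(5) py by blast
  qed
  moreover have "\<forall>k<h. bedge n (xs[i := y] ! k) (ts[i - 1 := s, i := s'] ! k) (xs[i := y] ! Suc k)"
  proof (intro allI impI)
    fix k assume k: "k < h"
    consider "k = i - 1" | "k = i" | "k \<noteq> i - 1 \<and> k \<noteq> i" by blast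
    then show "bedge n (xs[i := y] ! k) (ts[i - 1 := s, i := s'] ! k) (xs[i := y] ! Suc k)"
    proof cases
      case 1 then show ?thesis using i y D(1,2) by auto
    next
      case 2 then show ?thesis using i y D(1,2) by auto
    next
      case 3
      hence "Suc k \<noteq> i" using i by auto
      then show ?thesis using 3 D(6)[OF k] k D(1,2) by auto
    qed
  qed
  ultimately show ?thesis using D(1,2) unfolding bpaths_def by auto
qed

lemma flip_in_bpaths:
  assumes p: "p \<in> bpaths n h u v" and i: "1 \<le> i" "i < h"
  shows "flip n i p \<in> bpaths n h u v"
proof -
  obtain xs ts where pe: "p = (xs, ts)" by (cases p)
  obtain y s s' where y: "y \<noteq> xs ! i" "bedge n (xs ! (i - 1)) s y" "bedge n y s' (xs ! Suc i)"
     "flip n i (xs, ts) = (xs[i := y], ts[i - 1 := s, i := s'])"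
    using flip_exists[OF p[unfolded pe] i] by blast
  show ?thesis using flip_bpaths[OF p[unfolded pe] i y(1-3)] y(4) pe by simp
qed

lemma flip_invol:
  assumes p: "p \<in> bpaths n h u v" and i: "1 \<le> i" "i < h"
  shows "flip n i (flip n i p) = p"
proof -
  obtain xs ts where pe: "p = (xs, ts)" by (cases p)
  note D = bpathsD[OF p[unfolded pe]]
  obtain y s s' where y: "y \<noteq> xs ! i" "bedge n (xs ! (i - 1)) s y" "bedge n y s' (xs ! Suc i)"
     and fl: "flip n i (xs, ts) = (xs[i := y], ts[i - 1 := s, i := s'])"
    using flip_exists[OF p[unfolded pe] i] by blast
  have q: "(xs[i := y], ts[i - 1 := s, i := s']) \<in> bpaths n h u v" using flip_bpaths[OF p[unfolded pe] i y] .
  have e1: "bedge n (xs ! (i - 1)) (ts ! (i - 1)) (xs ! i)" using D(6)[of "i - 1"] i by simp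
  have e2: "bedge n (xs ! i) (ts ! i) (xs ! Suc i)" using D(6)[of i] i by simp
  have li: "i < length xs" "Suc i < length xs" "i - 1 \<noteq> i" "i < length ts" using D(1,2) i by auto
  have "flip n i (xs[i := y], ts[i - 1 := s, i := s']) =
     ((xs[i := y])[i := xs ! i], (ts[i - 1 := s, i := s'])[i - 1 := ts ! (i - 1), i := ts ! i])"
    by (rule flip_unique[OF q i]) (use y e1 e2 li in auto)
  also have "\<dots> = (xs, ts)"
  proof -
    have "(ts[i - 1 := s, i := s'])[i - 1 := ts ! (i - 1), i := ts ! i] = ts[i - 1 := ts ! (i - 1), i := ts ! i]"
      using li(3) by (simp add: list_update_swap)
    also have "\<dots> = ts" by simp
    finally show ?thesis by simp
  qed
  finally show ?thesis using fl pe by simp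
qed

definition lab :: "(nat \<times> nat) list \<Rightarrow> nat set" where
  "lab ts = (\<Union>k<length ts. lset (ts ! k))"

lemma moved_lab:
  assumes "\<forall>k<length (snd p). snd p ! k \<in> transp_set n"
  shows "moved p = lab (snd p)"
proof -
  have H: "\<And>t a. t \<in> transp_set n \<Longrightarrow> swapv t a \<noteq> a \<longleftrightarrow> a \<in> lset t"
    unfolding transp_set_def swapv_def lset_def by auto
  show ?thesis
  proof (rule set_eqI)
    fix a
    have key: "\<And>k. k < length (snd p) \<Longrightarrow> swapv (snd p ! k) a \<noteq> a \<longleftrightarrow> a \<in> lset (snd p ! k)"
      using assms H by blast
    show "a \<in> moved p \<longleftrightarrow> a \<in> lab (snd p)" unfolding moved_def lab_def mem_Collect_eq
      using key by blast
  qed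
qed

lemma bpaths_labels: "(xs, ts) \<in> bpaths n h u v \<Longrightarrow> k < length ts \<Longrightarrow> ts ! k \<in> transp_set n"
  using bpathsD(1,6) unfolding bedge_def by blast

lemma flip_lab_sub:
  assumes p: "p \<in> bpaths n h u v" and i: "1 \<le> i" "i < h"
  shows "lab (snd (flip n i p)) \<subseteq> lab (snd p)"
proof -
  obtain xs ts where pe: "p = (xs, ts)" by (cases p)
  note D = bpathsD[OF p[unfolded pe]]
  obtain y s s' where y: "y \<noteq> xs ! i" "bedge n (xs ! (i - 1)) s y" "bedge n y s' (xs ! Suc i)"
     and fl: "flip n i (xs, ts) = (xs[i := y], ts[i - 1 := s, i := s'])"
    using flip_exists[OF p[unfolded pe] i] by blast
  have e1: "bedge n (xs ! (i - 1)) (ts ! (i - 1)) (xs ! i)" using D(6)[of "i - 1"] i by simp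
  have e2: "bedge n (xs ! i) (ts ! i) (xs ! Suc i)" using D(6)[of i] i by simp
  have sup: "lset s \<union> lset s' \<subseteq> lset (ts ! (i - 1)) \<union> lset (ts ! i)" using two_path_supp[OF e1 e2 y(2,3)] .
  have li: "i < length ts" "i - 1 < length ts" using D(1) i by auto
  show ?thesis unfolding pe fl lab_def snd_conv
  proof
    fix a assume "a \<in> (\<Union>k<length (ts[i - 1 := s, i := s']). lset (ts[i - 1 := s, i := s'] ! k))"
    then obtain k where k: "k < length ts" "a \<in> lset (ts[i - 1 := s, i := s'] ! k)" by auto
    consider "k = i" | "k = i - 1" "k \<noteq> i" | "k \<noteq> i" "k \<noteq> i - 1" by blast
    then show "a \<in> (\<Union>k<length ts. lset (ts ! k))"
    proof cases
      case 1 then have "a \<in> lset s'" using k li by simp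
      then show ?thesis using sup li by blast
    next
      case 2 then have "a \<in> lset s" using k li by simp
      then show ?thesis using sup li by blast
    next
      case 3 then show ?thesis using k by auto
    qed
  qed
qed

lemma flip_lab:
  assumes p: "p \<in> bpaths n h u v" and i: "1 \<le> i" "i < h"
  shows "lab (snd (flip n i p)) = lab (snd p)"
proof
  show "lab (snd (flip n i p)) \<subseteq> lab (snd p)" using flip_lab_sub[OF p i] .
  have "lab (snd (flip n i (flip n i p))) \<subseteq> lab (snd (flip n i p))"
    using flip_lab_sub[OF flip_in_bpaths[OF p i] i] .
  thus "lab (snd p) \<subseteq> lab (snd (flip n i p))" using flip_invol[OF p i] by simp
qed

lemma flipstep_flip:
  assumes "(q, r) \<in> flipstep n h u v"
  shows "q \<in> bpaths n h u v \<and> r \<in> bpaths n h u v \<and> (\<exists>i. 1 \<le> i \<and> i < h \<and> r = flip n i q)"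
proof -
  have q: "q \<in> bpaths n h u v" and r: "r \<in> bpaths n h u v"
    and "\<exists>i\<in>{1..h - 1}. r = flip n i q \<or> q = flip n i r" using assms unfolding flipstep_def by auto
  then obtain i where i: "1 \<le> i" "i < h" and o: "r = flip n i q \<or> q = flip n i r" by auto
  have "r = flip n i q"
  proof (cases "r = flip n i q")
    case False
    hence "q = flip n i r" using o by blast
    hence "flip n i q = flip n i (flip n i r)" by simp
    also have "\<dots> = r" using flip_invol[OF r i] .
    finally show ?thesis by simp
  qed
  then show ?thesis using q r i by blast
qed

lemma flip_flipstep:
  assumes "q \<in> bpaths n h u v" "1 \<le> i" "i < h"
  shows "(q, flip n i q) \<in> flipstep n h u v"
proof -
  have "i \<in> {1..h - 1}" using assms(2,3) by auto
  thus ?thesis using assms(1) flip_in_bpaths[OF assms] unfolding flipstep_def by blast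
qed


lemma rk_mono:
  assumes "finite E" "a \<in> E" "a < b" shows "rk E a < rk E b"
proof -
  have "{x \<in> E. x < a} \<subset> {x \<in> E. x < b}" using assms by auto
  hence "card {x \<in> E. x < a} < card {x \<in> E. x < b}" using assms(1) by (intro psubset_card_mono) auto
  thus ?thesis unfolding rk_def by simp
qed

lemma rk_less_iff:
  assumes "finite E" "a \<in> E" "b \<in> E" shows "rk E a < rk E b \<longleftrightarrow> a < b"
  using rk_mono[OF assms(1,2)] rk_mono[OF assms(1,3)] by (metis less_asym linorder_neqE_nat)

lemma rk_inj: "finite E \<Longrightarrow> inj_on (rk E) E"
  unfolding inj_on_def by (metis rk_less_iff less_irrefl linorder_neqE_nat)

lemma rk_range:
  assumes "finite E" "a \<in> E" shows "1 \<le> rk E a \<and> rk E a \<le> card E"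
proof -
  have "{x \<in> E. x < a} \<subset> E" using assms by auto
  hence "card {x \<in> E. x < a} < card E" using assms(1) by (intro psubset_card_mono) auto
  thus ?thesis unfolding rk_def by simp
qed

lemma rk_image: assumes "finite E" shows "rk E ` E = {1..card E}"
proof -
  have "rk E ` E \<subseteq> {1..card E}" using rk_range[OF assms] by auto
  moreover have "card (rk E ` E) = card {1..card E}" using card_image[OF rk_inj[OF assms]] by simp
  ultimately show ?thesis by (intro card_subset_eq) auto
qed

lemma rk_inv_rk:
  assumes fin: "finite E" and a: "a \<in> E" shows "rk_inv E (rk E a) = a"
proof -
  define s where "s = sorted_list_of_set E"
  have ss: "sorted_wrt (<) s" "set s = E" "distinct s" using fin unfolding s_def by auto
  define k where "k = idx s a"
  have ks: "k < length s" "s ! k = a" using a ss(2) unfolding k_def by (auto simp: idx_lt nth_idx)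
  have "{x \<in> E. x < a} = (!) s ` {..<k}"
  proof
    show "(!) s ` {..<k} \<subseteq> {x \<in> E. x < a}"
    proof
      fix x assume "x \<in> (!) s ` {..<k}"
      then obtain j where j: "j < k" "x = s ! j" by auto
      hence "x < a" using ss(1) ks by (metis sorted_wrt_nth_less)
      moreover have "x \<in> E" using j ks ss(2) by auto
      ultimately show "x \<in> {x \<in> E. x < a}" by auto
    qed
  next
    show "{x \<in> E. x < a} \<subseteq> (!) s ` {..<k}"
    proof
      fix x assume x: "x \<in> {x \<in> E. x < a}"
      then obtain j where j: "j < length s" "s ! j = x" using ss(2) by (metis in_set_conv_nth mem_Collect_eq)
      have "j < k"
      proof (rule ccontr)
        assume "\<not> j < k"
        hence "k \<le> j" by simp
        hence "s ! k \<le> s ! j" using ss(1) j(1) by (metis le_neq_implies_less less_imp_le sorted_wrt_nth_less order_refl)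
        thus False using x j ks by auto
      qed
      thus "x \<in> (!) s ` {..<k}" using j by auto
    qed
  qed
  moreover have "inj_on ((!) s) {..<k}" using ss(3) ks(1) unfolding inj_on_def by (simp add: nth_eq_iff_index_eq)
  ultimately have "card {x \<in> E. x < a} = k" by (simp add: card_image)
  thus ?thesis unfolding rk_inv_def rk_def s_def[symmetric] using ks by simp
qed

lemma rtr_inv_rtr: "finite E \<Longrightarrow> lset t \<subseteq> E \<Longrightarrow> rtr_inv E (rtr E t) = t"
  unfolding rtr_inv_def rtr_def lset_def by (simp add: rk_inv_rk)

lemma rtr_inj: "finite E \<Longrightarrow> inj_on (rtr E) {t. lset t \<subseteq> E}"
  by (metis (mono_tags, lifting) inj_onI mem_Collect_eq rtr_inv_rtr)

lemma perm_rperm: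
  assumes "perm_n n x" "E \<subseteq> {1..n}" shows "perm_n (card E) (rperm E x)"
proof -
  have fin: "finite E" using assms(2) finite_subset by blast
  have "set (filter (\<lambda>v. v \<in> E) x) = E" using assms perm_set by auto
  moreover have "distinct (filter (\<lambda>v. v \<in> E) x)" using perm_distinct[OF assms(1)] by simp
  ultimately show ?thesis unfolding rperm_def perm_n_def using rk_inj[OF fin] rk_image[OF fin]
    by (simp add: distinct_map)
qed

lemma swapv_in: "lset t \<subseteq> E \<Longrightarrow> swapv t v \<in> E \<longleftrightarrow> v \<in> E"
  unfolding lset_def swapv_def by auto

lemma rk_swapv:
  assumes "finite E" "lset t \<subseteq> E" "v \<in> E" shows "rk E (swapv t v) = swapv (rtr E t) (rk E v)"
proof -
  have i: "inj_on (rk E) E" using rk_inj[OF assms(1)] .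
  have ab: "fst t \<in> E" "snd t \<in> E" using assms(2) unfolding lset_def by auto
  show ?thesis
  proof (cases "v = fst t")
    case True then show ?thesis unfolding swapv_def rtr_def by simp
  next
    case False
    hence n1: "rk E v \<noteq> rk E (fst t)" using i ab assms(3) by (metis inj_on_contraD)
    show ?thesis
    proof (cases "v = snd t")
      case True then show ?thesis using n1 False unfolding swapv_def rtr_def by auto
    next
      case False
      hence "rk E v \<noteq> rk E (snd t)" using i ab assms(3) by (metis inj_on_contraD)
      then show ?thesis using n1 False `v \<noteq> fst t` unfolding swapv_def rtr_def by auto
    qed
  qed
qed

lemma rperm_tmul:
  assumes "finite E" "lset t \<subseteq> E" shows "rperm E (tmul t x) = tmul (rtr E t) (rperm E x)"
proof -
  have "filter (\<lambda>v. v \<in> E) (map (swapv t) x) = map (swapv t) (filter (\<lambda>v. v \<in> E) x)"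
    using swapv_in[OF assms(2)] by (induction x) auto
  moreover have "map (rk E) (map (swapv t) (filter (\<lambda>v. v \<in> E) x)) = map (swapv (rtr E t)) (map (rk E) (filter (\<lambda>v. v \<in> E) x))"
    using rk_swapv[OF assms] by auto
  ultimately show ?thesis unfolding rperm_def tmul_def by simp
qed

lemma idx_rperm:
  assumes fin: "finite E" and dx: "distinct x" and a: "a \<in> set x" "a \<in> E" and b: "b \<in> set x" "b \<in> E" and ab: "a \<noteq> b"
  shows "idx x a < idx x b \<longleftrightarrow> idx (rperm E x) (rk E a) < idx (rperm E x) (rk E b)"
proof -
  let ?f = "filter (\<lambda>v. v \<in> E) x"
  have inj: "inj_on (rk E) (set ?f)" using rk_inj[OF fin] by (rule inj_on_subset) auto
  have fa: "a \<in> set ?f" "b \<in> set ?f" using a b by auto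
  have r: "idx (rperm E x) (rk E a) = idx ?f a" "idx (rperm E x) (rk E b) = idx ?f b"
    unfolding rperm_def using idx_map_inj[OF inj] fa by auto
  have "idx x a < idx x b \<Longrightarrow> idx ?f a < idx ?f b" using idx_filter[OF a(1) b(1), of "\<lambda>v. v \<in> E"] a b by simp
  moreover have "idx x b < idx x a \<Longrightarrow> idx ?f b < idx ?f a" using idx_filter[OF b(1) a(1), of "\<lambda>v. v \<in> E"] a b by simp
  moreover have "idx x a < idx x b \<longleftrightarrow> \<not> idx x b < idx x a" using idx_order_iff[OF dx a(1) b(1) ab] .
  ultimately show ?thesis unfolding r by linarith
qed

lemma bedge_rperm:
  assumes e: "bedge n x t y" and lt: "lset t \<subseteq> E" and En: "E \<subseteq> {1..n}"
  shows "bedge (card E) (rperm E x) (rtr E t) (rperm E y)"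
proof -
  have fin: "finite E" using En finite_subset by blast
  have px: "perm_n n x" and ts: "t \<in> transp_set n" and y: "y = tmul t x" and id: "idx x (fst t) < idx x (snd t)"
    using e unfolding bedge_iff by auto
  have ab: "fst t \<in> E" "snd t \<in> E" using lt unfolding lset_def by auto
  have lt2: "fst t < snd t" using transp_letters[OF ts] by auto
  have "rtr E t \<in> transp_set (card E)"
    using rk_range[OF fin ab(1)] rk_range[OF fin ab(2)] rk_mono[OF fin ab(1) lt2]
    unfolding rtr_def by (intro transp_setI) auto
  moreover have "rperm E y = tmul (rtr E t) (rperm E x)" using rperm_tmul[OF fin lt] y by simp
  moreover have "idx (rperm E x) (rk E (fst t)) < idx (rperm E x) (rk E (snd t))"
  proof -
    have "fst t \<in> set x" "snd t \<in> set x" using ab En perm_set[OF px] by auto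
    thus ?thesis using idx_rperm[OF fin perm_distinct[OF px], of "fst t" "snd t"] id ab lt2 by auto
  qed
  ultimately show ?thesis using perm_rperm[OF px En] unfolding bedge_iff rtr_def by simp
qed

definition agree :: "nat set \<Rightarrow> nat list \<Rightarrow> nat list \<Rightarrow> bool" where
  "agree E u x \<longleftrightarrow> length x = length u \<and> (\<forall>i<length u. (u ! i \<notin> E \<longrightarrow> x ! i = u ! i) \<and> (u ! i \<in> E \<longrightarrow> x ! i \<in> E))"

lemma agree_refl: "agree E u u" unfolding agree_def by auto

lemma agree_tmul: "agree E u x \<Longrightarrow> lset t \<subseteq> E \<Longrightarrow> agree E u (tmul t x)"
  unfolding agree_def tmul_def using swapv_in[of t E] by (auto simp: swapv_def lset_def)

lemma agree_inj:
  "agree E u x \<Longrightarrow> agree E u x' \<Longrightarrow> filter (\<lambda>v. v \<in> E) x = filter (\<lambda>v. v \<in> E) x' \<Longrightarrow> x = x'"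
proof (induction u arbitrary: x x')
  case Nil then show ?case unfolding agree_def by auto
next
  case (Cons c u)
  obtain d x1 where x: "x = d # x1" using Cons.prems(1) unfolding agree_def by (cases x) auto
  obtain d' x1' where x': "x' = d' # x1'" using Cons.prems(2) unfolding agree_def by (cases x') auto
  have a1: "agree E u x1" "agree E u x1'" using Cons.prems(1,2) unfolding x x' agree_def by force+
  have h: "(c \<notin> E \<longrightarrow> d = c) \<and> (c \<in> E \<longrightarrow> d \<in> E)" "(c \<notin> E \<longrightarrow> d' = c) \<and> (c \<in> E \<longrightarrow> d' \<in> E)"
    using Cons.prems(1,2) unfolding x x' agree_def by force+
  show ?case
  proof (cases "c \<in> E")
    case True
    then have "d = d' \<and> filter (\<lambda>v. v \<in> E) x1 = filter (\<lambda>v. v \<in> E) x1'" using h Cons.prems(3) x x' by auto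
    then show ?thesis using Cons.IH[OF a1] x x' by auto
  next
    case False
    then have "d = d' \<and> filter (\<lambda>v. v \<in> E) x1 = filter (\<lambda>v. v \<in> E) x1'" using h Cons.prems(3) x x' by auto
    then show ?thesis using Cons.IH[OF a1] x x' by auto
  qed
qed

lemma rperm_inj:
  assumes "finite E" "agree E u x" "agree E u x'" "rperm E x = rperm E x'"
  shows "x = x'"
proof -
  have "inj_on (rk E) (set (filter (\<lambda>v. v \<in> E) x) \<union> set (filter (\<lambda>v. v \<in> E) x'))"
    using rk_inj[OF assms(1)] by (rule inj_on_subset) auto
  hence "filter (\<lambda>v. v \<in> E) x = filter (\<lambda>v. v \<in> E) x'" using assms(4) unfolding rperm_def
    using inj_on_map_eq_map by blast
  thus ?thesis using agree_inj assms(2,3) by blast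
qed


lemma F_props:
  assumes p0: "p0 \<in> bpaths n h u v" and q: "(p0, q) \<in> (flipstep n h u v)\<^sup>*"
  shows "q \<in> bpaths n h u v \<and> lab (snd q) = lab (snd p0)"
  using q
proof (induction rule: rtrancl_induct)
  case base then show ?case using p0 by simp
next
  case (step q r)
  obtain i where i: "1 \<le> i" "i < h" "r = flip n i q" and qb: "q \<in> bpaths n h u v" and rb: "r \<in> bpaths n h u v"
    using flipstep_flip[OF step.hyps(2)] by blast
  then show ?case using flip_lab[OF qb i(1,2)] step.IH by simp
qed

lemma Eset_eq:
  assumes p0: "p0 \<in> bpaths n h u v" and F: "F = {q. (p0, q) \<in> (flipstep n h u v)\<^sup>*}"
  shows "Eset F = lab (snd p0)"
proof -
  have "p0 \<in> F" using F by simp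
  hence "(SOME p. p \<in> F) \<in> F" by (rule someI)
  then obtain q where q: "q \<in> F" "(SOME p. p \<in> F) = q" by blast
  have "(p0, q) \<in> (flipstep n h u v)\<^sup>*" using q(1) F by blast
  note FP = F_props[OF p0 this]
  have qb: "q \<in> bpaths n h u v" using FP by (rule conjunct1)
  have ql: "lab (snd q) = lab (snd p0)" using FP by (rule conjunct2)
  obtain xs ts where qe: "q = (xs, ts)" by (cases q)
  have "\<forall>k<length (snd q). snd q ! k \<in> transp_set n"
  proof (intro allI impI)
    fix k assume "k < length (snd q)"
    thus "snd q ! k \<in> transp_set n" using bpaths_labels[of xs ts n h u v k] qb qe by simp
  qed
  hence "moved q = lab (snd q)" by (rule moved_lab)
  thus ?thesis unfolding Eset_def q(2) using ql by simp
qed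

lemma lab_sub:
  assumes "(xs, ts) \<in> bpaths n h u v" shows "lab ts \<subseteq> {1..n}"
proof
  fix a assume "a \<in> lab ts"
  then obtain k where k: "k < length ts" "a \<in> lset (ts ! k)" unfolding lab_def by auto
  have "ts ! k \<in> transp_set n" using bpaths_labels[OF assms k(1)] .
  from transp_letters[OF this] k(2) show "a \<in> {1..n}" unfolding lset_def by auto
qed

lemma lab_nth: "k < length ts \<Longrightarrow> lset (ts ! k) \<subseteq> lab ts"
  unfolding lab_def by auto

lemma agree_path:
  assumes q: "(xs, ts) \<in> bpaths n h u v" and l: "lab ts \<subseteq> E" and k: "k \<le> h"
  shows "agree E u (xs ! k)"
  using k
proof (induction k)
  case 0
  have "xs \<noteq> []" using bpathsD(2)[OF q] by auto
  then have "xs ! 0 = u" using bpathsD(3)[OF q] by (simp add: hd_conv_nth)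
  then show ?case by (simp add: agree_refl)
next
  case (Suc k)
  have "bedge n (xs ! k) (ts ! k) (xs ! Suc k)" using bpathsD(6)[OF q] Suc by simp
  hence "xs ! Suc k = tmul (ts ! k) (xs ! k)" unfolding bedge_def by simp
  moreover have "lset (ts ! k) \<subseteq> E" using lab_nth[of k ts] l bpathsD(1)[OF q] Suc by auto
  ultimately show ?case using agree_tmul Suc by simp
qed

lemma rpath_bpaths:
  assumes q: "(xs, ts) \<in> bpaths n h u v" and l: "lab ts \<subseteq> E" and En: "E \<subseteq> {1..n}"
  shows "rpath E (xs, ts) \<in> bpaths (card E) h (rperm E u) (rperm E v)"
proof -
  note D = bpathsD[OF q]
  have ne: "xs \<noteq> []" using D(2) by auto
  have "hd (map (rperm E) xs) = rperm E u" "last (map (rperm E) xs) = rperm E v" using ne D(3,4)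
    by (simp_all add: hd_map last_map)
  moreover have "\<forall>x\<in>set (map (rperm E) xs). perm_n (card E) x" using D(5) perm_rperm En by auto
  moreover have "\<forall>k<h. bedge (card E) (map (rperm E) xs ! k) (map (rtr E) ts ! k) (map (rperm E) xs ! Suc k)"
  proof (intro allI impI)
    fix k assume k: "k < h"
    have "lset (ts ! k) \<subseteq> E" using lab_nth[of k ts] l D(1) k by auto
    then show "bedge (card E) (map (rperm E) xs ! k) (map (rtr E) ts ! k) (map (rperm E) xs ! Suc k)"
      using bedge_rperm[OF D(6)[OF k] _ En] k D(1,2) by simp
  qed
  ultimately show ?thesis using D(1,2) unfolding bpaths_def rpath_def by simp
qed

locale FC =
  fixes n h u v p0 F
  assumes p0: "p0 \<in> bpaths n h u v" and Fdef: "F = {q. (p0, q) \<in> (flipstep n h u v)\<^sup>*}"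
begin

definition "E = lab (snd p0)"

lemma E_eq: "Eset F = E" using Eset_eq[OF p0 Fdef] unfolding E_def .

lemma Freach: "q \<in> F \<Longrightarrow> (p0, q) \<in> (flipstep n h u v)\<^sup>*" using Fdef by blast
lemma FB: "q \<in> F \<Longrightarrow> q \<in> bpaths n h u v" using F_props[OF p0 Freach] by (rule conjunct1)
lemma FL: "q \<in> F \<Longrightarrow> lab (snd q) = E" using F_props[OF p0 Freach] unfolding E_def by (rule conjunct2)

lemma En: "E \<subseteq> {1..n}"
proof -
  obtain xs ts where "p0 = (xs, ts)" by (cases p0)
  thus ?thesis using lab_sub p0 unfolding E_def by auto
qed

lemma finE: "finite E" using En finite_subset by blast

lemma p0F: "p0 \<in> F" using Fdef by blast

lemma F_flip: assumes q: "q \<in> F" and i: "1 \<le> i" "i < h" shows "flip n i q \<in> F"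
proof -
  have "(p0, q) \<in> (flipstep n h u v)\<^sup>*" using q Fdef by blast
  moreover have "(q, flip n i q) \<in> flipstep n h u v" using flip_flipstep[OF FB[OF q] i] .
  ultimately have "(p0, flip n i q) \<in> (flipstep n h u v)\<^sup>*" by (rule rtrancl.rtrancl_into_rtrancl)
  thus ?thesis using Fdef by blast
qed

lemma F_lset: assumes "q \<in> F" "k < length (snd q)" shows "lset (snd q ! k) \<subseteq> E"
proof -
  have "lset (snd q ! k) \<subseteq> lab (snd q)" using lab_nth[OF assms(2)] .
  thus ?thesis using FL[OF assms(1)] by simp
qed

lemma F_agree: "q \<in> F \<Longrightarrow> k \<le> h \<Longrightarrow> agree E u (fst q ! k)"
proof -
  assume q: "q \<in> F" "k \<le> h"
  obtain xs ts where qe: "q = (xs, ts)" by (cases q)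
  show ?thesis using agree_path[of xs ts n h u v E k] FB[OF q(1)] FL[OF q(1)] q(2) qe by auto
qed

lemma F_rpath: "q \<in> F \<Longrightarrow> rpath E q \<in> bpaths (card E) h (rperm E u) (rperm E v)"
proof -
  assume q: "q \<in> F"
  obtain xs ts where qe: "q = (xs, ts)" by (cases q)
  show ?thesis using rpath_bpaths[of xs ts n h u v E] FB[OF q] FL[OF q] En qe by auto
qed

lemma rpath_flip:
  assumes q: "q \<in> F" and i: "1 \<le> i" "i < h"
  shows "rpath E (flip n i q) = flip (card E) i (rpath E q)"
proof -
  obtain xs ts where qe: "q = (xs, ts)" by (cases q)
  have qb: "(xs, ts) \<in> bpaths n h u v" using FB[OF q] qe by simp
  note D = bpathsD[OF qb]
  obtain y s s' where y: "y \<noteq> xs ! i" "bedge n (xs ! (i - 1)) s y" "bedge n y s' (xs ! Suc i)"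
     and fl: "flip n i (xs, ts) = (xs[i := y], ts[i - 1 := s, i := s'])"
    using flip_exists[OF qb i] by blast
  have fF: "(xs[i := y], ts[i - 1 := s, i := s']) \<in> F" using F_flip[OF q i] fl qe by simp
  have li: "i < length ts" "i - 1 < length ts" "i - 1 \<noteq> i" "i < length xs" using D(1,2) i by auto
  have ls: "lset s \<subseteq> E" using F_lset[OF fF, of "i - 1"] li by simp
  have ls': "lset s' \<subseteq> E" using F_lset[OF fF, of i] li by simp
  have ay: "agree E u y" using F_agree[OF fF, of i] li i by simp
  have ax: "agree E u (xs ! i)" using F_agree[OF q, of i] qe i by simp
  have rq: "(map (rperm E) xs, map (rtr E) ts) \<in> bpaths (card E) h (rperm E u) (rperm E v)"
    using F_rpath[OF q] qe unfolding rpath_def by simp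
  have ry: "rperm E y \<noteq> map (rperm E) xs ! i" using rperm_inj[OF finE ay ax] y(1) li by auto
  have b1: "bedge (card E) (map (rperm E) xs ! (i - 1)) (rtr E s) (rperm E y)"
    using bedge_rperm[OF y(2) ls En] li by simp
  have b2: "bedge (card E) (rperm E y) (rtr E s') (map (rperm E) xs ! Suc i)"
    using bedge_rperm[OF y(3) ls' En] D(2) i by simp
  have "flip (card E) i (rpath E q) = ((map (rperm E) xs)[i := rperm E y], (map (rtr E) ts)[i - 1 := rtr E s, i := rtr E s'])"
    unfolding qe rpath_def fst_conv snd_conv using flip_unique[OF rq i ry b1 b2] .
  also have "\<dots> = rpath E (flip n i q)" unfolding qe fl rpath_def by (simp add: map_update)
  finally show ?thesis by simp
qed

lemma rpath_inj: "inj_on (rpath E) F"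
proof (rule inj_onI)
  fix q q' assume q: "q \<in> F" and q': "q' \<in> F" and e: "rpath E q = rpath E q'"
  obtain xs ts where qe: "q = (xs, ts)" by (cases q)
  obtain xs' ts' where qe': "q' = (xs', ts')" by (cases q')
  have qb: "(xs, ts) \<in> bpaths n h u v" using FB[OF q] qe by simp
  have qb': "(xs', ts') \<in> bpaths n h u v" using FB[OF q'] qe' by simp
  have D: "length xs = Suc h" "length ts = h" using bpathsD[OF qb] by auto
  have D': "length xs' = Suc h" "length ts' = h" using bpathsD[OF qb'] by auto
  have m: "map (rperm E) xs = map (rperm E) xs'" "map (rtr E) ts = map (rtr E) ts'"
    using e unfolding qe qe' rpath_def by auto
  have "xs = xs'"
  proof (rule nth_equalityI)
    show "length xs = length xs'" using D D' by simp
    fix k assume k: "k < length xs"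
    have "rperm E (xs ! k) = rperm E (xs' ! k)" using m(1) k D D' by (metis nth_map)
    moreover have "agree E u (xs ! k)" "agree E u (xs' ! k)" using F_agree[OF q, of k] F_agree[OF q', of k] qe qe' k D by auto
    ultimately show "xs ! k = xs' ! k" using rperm_inj[OF finE] by blast
  qed
  moreover have "ts = ts'"
  proof -
    have "set ts \<union> set ts' \<subseteq> {t. lset t \<subseteq> E}"
    proof
      fix t assume "t \<in> set ts \<union> set ts'"
      then consider "t \<in> set ts" | "t \<in> set ts'" by blast
      then show "t \<in> {t. lset t \<subseteq> E}"
      proof cases
        case 1 then obtain k where "k < length ts" "t = ts ! k" by (metis in_set_conv_nth)
        then show ?thesis using F_lset[OF q, of k] qe by simp
      next
        case 2 then obtain k where "k < length ts'" "t = ts' ! k" by (metis in_set_conv_nth)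
        then show ?thesis using F_lset[OF q', of k] qe' by simp
      qed
    qed
    hence "inj_on (rtr E) (set ts \<union> set ts')" using rtr_inj[OF finE] by (rule inj_on_subset[rotated])
    thus ?thesis using m(2) inj_on_map_eq_map by blast
  qed
  ultimately show "q = q'" using qe qe' by simp
qed

lemma rpath_flipstep:
  assumes "(q, r) \<in> flipstep n h u v" "q \<in> F"
  shows "(rpath E q, rpath E r) \<in> flipstep (card E) h (rperm E u) (rperm E v)"
proof -
  obtain i where i: "1 \<le> i" "i < h" "r = flip n i q" using flipstep_flip[OF assms(1)] by blast
  have rF: "r \<in> F" using F_flip[OF assms(2) i(1,2)] i(3) by simp
  have "rpath E r = flip (card E) i (rpath E q)" using rpath_flip[OF assms(2) i(1,2)] i(3) by simp
  moreover have "i \<in> {1..h - 1}" using i by auto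
  ultimately show ?thesis using F_rpath[OF assms(2)] F_rpath[OF rF] unfolding flipstep_def by blast
qed

lemma is_fc: "is_flipclass (card E) h (rpath E ` F)"
proof -
  let ?S = "flipstep (card E) h (rperm E u) (rperm E v)"
  have "rpath E ` F = {q'. (rpath E p0, q') \<in> ?S\<^sup>*}"
  proof
    show "rpath E ` F \<subseteq> {q'. (rpath E p0, q') \<in> ?S\<^sup>*}"
    proof
      fix q' assume "q' \<in> rpath E ` F"
      then obtain q where q: "q \<in> F" "q' = rpath E q" by blast
      have "(p0, q) \<in> (flipstep n h u v)\<^sup>*" using Freach q(1) by blast
      hence "(rpath E p0, rpath E q) \<in> ?S\<^sup>*"
      proof (induction rule: rtrancl_induct)
        case base then show ?case by simp
      next
        case (step a b)
        have "a \<in> F" using step.hyps(1) Fdef by (simp only: mem_Collect_eq)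
        then show ?case using rpath_flipstep[OF step.hyps(2)] step.IH by (meson rtrancl.rtrancl_into_rtrancl)
      qed
      thus "q' \<in> {q'. (rpath E p0, q') \<in> ?S\<^sup>*}" using q by simp
    qed
  next
    show "{q'. (rpath E p0, q') \<in> ?S\<^sup>*} \<subseteq> rpath E ` F"
    proof
      fix q' assume "q' \<in> {q'. (rpath E p0, q') \<in> ?S\<^sup>*}"
      hence "(rpath E p0, q') \<in> ?S\<^sup>*" by simp
      thus "q' \<in> rpath E ` F"
      proof (induction rule: rtrancl_induct)
        case base then show ?case using p0F by simp
      next
        case (step a b)
        obtain q where q: "q \<in> F" "a = rpath E q" using step.IH by blast
        obtain i where i: "1 \<le> i" "i < h" "b = flip (card E) i a" using flipstep_flip[OF step.hyps(2)] by blast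
        have "b = rpath E (flip n i q)" using rpath_flip[OF q(1) i(1,2)] i(3) q(2) by simp
        thus ?case using F_flip[OF q(1) i(1,2)] by blast
      qed
    qed
  qed
  thus ?thesis unfolding is_flipclass_def using F_rpath[OF p0F] by blast
qed

end


lemma elabels_image: "elabels (emap f g ` Es) = g ` elabels Es"
  unfolding elabels_def emap_def by force

lemma lg_iso_image:
  assumes fi: "inj_on f V" and gi: "inj_on g (elabels Es)"
    and ev: "\<And>x t y. (x, t, y) \<in> Es \<Longrightarrow> x \<in> V \<and> y \<in> V"
  shows "lg_iso V Es (f ` V) (emap f g ` Es) f g"
proof -
  have "inj_on (emap f g) Es"
  proof (rule inj_onI)
    fix e e' assume e: "e \<in> Es" "e' \<in> Es" "emap f g e = emap f g e'"
    obtain x t y where ee: "e = (x, t, y)" by (cases e) auto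
    obtain x' t' y' where ee': "e' = (x', t', y')" by (cases e') auto
    have "x \<in> V" "y \<in> V" "x' \<in> V" "y' \<in> V" using ev e(1,2) ee ee' by blast+
    moreover have "t \<in> elabels Es" "t' \<in> elabels Es" using e(1,2) ee ee' unfolding elabels_def by blast+
    moreover have "f x = f x'" "g t = g t'" "f y = f y'" using e(3) ee ee' unfolding emap_def by auto
    ultimately have "x = x'" "t = t'" "y = y'" using fi gi by (auto dest: inj_onD)
    thus "e = e'" using ee ee' by simp
  qed
  thus ?thesis unfolding lg_iso_def elabels_image using fi gi by (simp add: inj_on_imp_bij_betw)
qed

lemma lpaths_image:
  assumes fi: "inj_on f V" and gi: "inj_on g (elabels Es)"
    and ev: "\<And>x t y. (x, t, y) \<in> Es \<Longrightarrow> x \<in> V \<and> y \<in> V"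
    and RR: "\<And>s t. s \<in> elabels Es \<Longrightarrow> t \<in> elabels Es \<Longrightarrow> (g s, g t) \<in> R' \<longleftrightarrow> (s, t) \<in> R"
  shows "bij_betw (pmap f g) {p \<in> lpaths V Es. increasing R (snd p)}
           {p \<in> lpaths (f ` V) (emap f g ` Es). increasing R' (snd p)}"
proof -
  have lab: "\<And>xs ts i. (xs, ts) \<in> lpaths V Es \<Longrightarrow> i < length ts \<Longrightarrow> ts ! i \<in> elabels Es"
    unfolding lpaths_def elabels_def by blast
  have inj: "inj_on (pmap f g) {p \<in> lpaths V Es. increasing R (snd p)}"
  proof (rule inj_onI)
    fix p p' assume p: "p \<in> {p \<in> lpaths V Es. increasing R (snd p)}" and p': "p' \<in> {p \<in> lpaths V Es. increasing R (snd p)}"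
      and e: "pmap f g p = pmap f g p'"
    obtain xs ts where pe: "p = (xs, ts)" by (cases p)
    obtain xs' ts' where pe': "p' = (xs', ts')" by (cases p')
    have l: "(xs, ts) \<in> lpaths V Es" "(xs', ts') \<in> lpaths V Es" using p p' pe pe' by auto
    have "set xs \<union> set xs' \<subseteq> V" using l unfolding lpaths_def by auto
    hence "inj_on f (set xs \<union> set xs')" using fi by (rule inj_on_subset[rotated])
    moreover have "map f xs = map f xs'" using e pe pe' unfolding pmap_def by simp
    ultimately have "xs = xs'" using inj_on_map_eq_map by blast
    have "set ts \<union> set ts' \<subseteq> elabels Es" using lab[OF l(1)] lab[OF l(2)] by (auto simp: in_set_conv_nth)
    hence "inj_on g (set ts \<union> set ts')" using gi by (rule inj_on_subset[rotated])
    moreover have "map g ts = map g ts'" using e pe pe' unfolding pmap_def by simp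
    ultimately have "ts = ts'" using inj_on_map_eq_map by blast
    show "p = p'" using pe pe' `xs = xs'` `ts = ts'` by simp
  qed
  have sub: "pmap f g ` {p \<in> lpaths V Es. increasing R (snd p)} \<subseteq> {p \<in> lpaths (f ` V) (emap f g ` Es). increasing R' (snd p)}"
  proof
    fix q assume "q \<in> pmap f g ` {p \<in> lpaths V Es. increasing R (snd p)}"
    then obtain xs ts where l: "(xs, ts) \<in> lpaths V Es" "increasing R ts" and q: "q = pmap f g (xs, ts)" by auto
    have L: "length xs = Suc (length ts)" "set xs \<subseteq> V" "\<And>i. i < length ts \<Longrightarrow> (xs ! i, ts ! i, xs ! Suc i) \<in> Es"
      using l(1) unfolding lpaths_def by auto
    have "(map f xs, map g ts) \<in> lpaths (f ` V) (emap f g ` Es)"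
    proof -
      have "\<forall>i<length (map g ts). (map f xs ! i, map g ts ! i, map f xs ! Suc i) \<in> emap f g ` Es"
      proof (intro allI impI)
        fix i assume "i < length (map g ts)"
        hence i: "i < length ts" "Suc i < length xs" using L(1) by auto
        have "emap f g (xs ! i, ts ! i, xs ! Suc i) = (map f xs ! i, map g ts ! i, map f xs ! Suc i)"
          unfolding emap_def using i by simp
        then show "(map f xs ! i, map g ts ! i, map f xs ! Suc i) \<in> emap f g ` Es" using L(3)[OF i(1)] by (metis image_eqI)
      qed
      thus ?thesis unfolding lpaths_def using L(1,2) by auto
    qed
    moreover have "increasing R' (map g ts)"
      unfolding increasing_def
    proof (intro allI impI)
      fix i assume i: "Suc i < length (map g ts)"
      have "(ts ! i, ts ! Suc i) \<in> R" using l(2) i unfolding increasing_def by simp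
      moreover have "ts ! i \<in> elabels Es" "ts ! Suc i \<in> elabels Es" using lab[OF l(1)] i by auto
      ultimately show "(map g ts ! i, map g ts ! Suc i) \<in> R'" using RR i by simp
    qed
    ultimately show "q \<in> {p \<in> lpaths (f ` V) (emap f g ` Es). increasing R' (snd p)}" using q unfolding pmap_def by simp
  qed
  have sup: "{p \<in> lpaths (f ` V) (emap f g ` Es). increasing R' (snd p)} \<subseteq> pmap f g ` {p \<in> lpaths V Es. increasing R (snd p)}"
  proof
    fix q assume "q \<in> {p \<in> lpaths (f ` V) (emap f g ` Es). increasing R' (snd p)}"
    then obtain xs' ts' where q: "q = (xs', ts')" "(xs', ts') \<in> lpaths (f ` V) (emap f g ` Es)" "increasing R' ts'"
      by (cases q) auto
    have L: "length xs' = Suc (length ts')" "set xs' \<subseteq> f ` V" "\<And>i. i < length ts' \<Longrightarrow> (xs' ! i, ts' ! i, xs' ! Suc i) \<in> emap f g ` Es"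
      using q(2) unfolding lpaths_def by auto
    define xs where "xs = map (inv_into V f) xs'"
    define ts where "ts = map (inv_into (elabels Es) g) ts'"
    have E: "\<And>i. i < length ts' \<Longrightarrow> (xs ! i, ts ! i, xs ! Suc i) \<in> Es \<and> g (ts ! i) = ts' ! i"
    proof -
      fix i assume i: "i < length ts'"
      obtain x t y where e: "(x, t, y) \<in> Es" "emap f g (x, t, y) = (xs' ! i, ts' ! i, xs' ! Suc i)"
        using L(3)[OF i] by force
      have xyV: "x \<in> V" "y \<in> V" using ev[OF e(1)] by auto
      have tL: "t \<in> elabels Es" using e(1) unfolding elabels_def by blast
      have fx: "f x = xs' ! i" "g t = ts' ! i" "f y = xs' ! Suc i" using e(2) unfolding emap_def by auto
      have "xs ! i = x" unfolding xs_def using L(1) i fx(1) inv_into_f_f[OF fi xyV(1)] by simp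
      moreover have "xs ! Suc i = y" unfolding xs_def using L(1) i fx(3) inv_into_f_f[OF fi xyV(2)] by simp
      moreover have "ts ! i = t" unfolding ts_def using i fx(2) inv_into_f_f[OF gi tL] by simp
      ultimately show "(xs ! i, ts ! i, xs ! Suc i) \<in> Es \<and> g (ts ! i) = ts' ! i" using e(1) fx(2) by simp
    qed
    have xsV: "set xs \<subseteq> V" unfolding xs_def using L(2) by (auto intro: inv_into_into)
    have "(xs, ts) \<in> lpaths V Es" unfolding lpaths_def using E xsV L(1) unfolding xs_def ts_def by auto
    moreover have tsL: "\<And>i. i < length ts \<Longrightarrow> ts ! i \<in> elabels Es" using E unfolding elabels_def ts_def by fastforce
    moreover have "increasing R ts"
      unfolding increasing_def
    proof (intro allI impI)
      fix i assume i: "Suc i < length ts"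
      have "(ts' ! i, ts' ! Suc i) \<in> R'" using q(3) i unfolding increasing_def ts_def by simp
      moreover have "g (ts ! i) = ts' ! i" "g (ts ! Suc i) = ts' ! Suc i" using E i unfolding ts_def by auto
      moreover have "i < length ts" using i by simp
      ultimately show "(ts ! i, ts ! Suc i) \<in> R" using RR[OF tsL[of i] tsL[of "Suc i"]] i by simp
    qed
    moreover have "pmap f g (xs, ts) = q"
    proof -
      have fy: "\<And>y. y \<in> set xs' \<Longrightarrow> f (inv_into V f y) = y" using L(2) by (auto intro: f_inv_into_f)
      have "map f xs = xs'" unfolding xs_def map_map comp_def by (rule map_idI) (rule fy)
      moreover have "map g ts = ts'" using E unfolding ts_def by (auto intro!: nth_equalityI)
      ultimately show ?thesis using q(1) unfolding pmap_def by simp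
    qed
    ultimately show "q \<in> pmap f g ` {p \<in> lpaths V Es. increasing R (snd p)}" by force
  qed
  show ?thesis using inj sub sup unfolding bij_betw_def by blast
qed


lemma rtr_transp:
  assumes "finite E" "lset t \<subseteq> E" "fst t < snd t" shows "rtr E t \<in> transp_set (card E)"
proof -
  have ab: "fst t \<in> E" "snd t \<in> E" using assms(2) unfolding lset_def by auto
  show ?thesis using rk_range[OF assms(1) ab(1)] rk_range[OF assms(1) ab(2)] rk_mono[OF assms(1) ab(1) assms(3)]
    unfolding rtr_def by (intro transp_setI) auto
qed

lemma bij_betw_restrict:
  assumes "bij_betw f A B" "\<And>a. a \<in> A \<Longrightarrow> P a \<longleftrightarrow> Q (f a)"
  shows "bij_betw f {a \<in> A. P a} {b \<in> B. Q b}"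
proof -
  have "inj_on f {a \<in> A. P a}" using assms(1) unfolding bij_betw_def by (auto intro: inj_on_subset)
  moreover have "f ` {a \<in> A. P a} = {b \<in> B. Q b}"
  proof
    show "f ` {a \<in> A. P a} \<subseteq> {b \<in> B. Q b}" using assms unfolding bij_betw_def by auto
    show "{b \<in> B. Q b} \<subseteq> f ` {a \<in> A. P a}"
    proof
      fix b assume b: "b \<in> {b \<in> B. Q b}"
      then obtain a where "a \<in> A" "b = f a" using assms(1) unfolding bij_betw_def by auto
      thus "b \<in> f ` {a \<in> A. P a}" using b assms(2) by auto
    qed
  qed
  ultimately show ?thesis unfolding bij_betw_def by simp
qed

context FC
begin

lemma F_lab_transp: "q \<in> F \<Longrightarrow> k < length (snd q) \<Longrightarrow> snd q ! k \<in> transp_set n"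
proof -
  assume q: "q \<in> F" "k < length (snd q)"
  obtain xs ts where qe: "q = (xs, ts)" by (cases q)
  show ?thesis using bpaths_labels[of xs ts n h u v k] FB[OF q(1)] q(2) qe by simp
qed

lemma F_len: "q \<in> F \<Longrightarrow> length (snd q) = h \<and> length (fst q) = Suc h"
proof -
  assume q: "q \<in> F"
  obtain xs ts where qe: "q = (xs, ts)" by (cases q)
  show ?thesis using bpathsD(1,2)[of xs ts n h u v] FB[OF q] qe by simp
qed

definition "goodlab = {t. lset t \<subseteq> E \<and> fst t < snd t}"

lemma F_good: "q \<in> F \<Longrightarrow> k < length (snd q) \<Longrightarrow> snd q ! k \<in> goodlab"
  using F_lset F_lab_transp transp_letters unfolding goodlab_def by blast

lemma rorder_iff:
  assumes "s \<in> goodlab" "t \<in> goodlab"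
  shows "(rtr E s, rtr E t) \<in> rorder E R \<longleftrightarrow> (s, t) \<in> R"
  using assms rtr_transp[OF finE] rtr_inv_rtr[OF finE] unfolding rorder_def goodlab_def by auto

lemma rtr_inj_good: "inj_on (rtr E) goodlab"
  using rtr_inj[OF finE] by (rule inj_on_subset) (auto simp: goodlab_def)

lemma SV_agree: "x \<in> SV F \<Longrightarrow> agree E u x"
proof -
  assume "x \<in> SV F"
  then obtain q where q: "q \<in> F" "x \<in> set (fst q)" unfolding SV_def by auto
  then obtain k where k: "k < length (fst q)" "x = fst q ! k" by (metis in_set_conv_nth)
  have "k \<le> h" using k F_len[OF q(1)] by simp
  thus ?thesis using F_agree[OF q(1)] k by simp
qed

lemma inj_rperm_SV: "inj_on (rperm E) (SV F)"
  by (rule inj_onI) (use rperm_inj[OF finE] SV_agree in blast)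

lemma SE_labels: "elabels (SE F) \<subseteq> goodlab"
proof
  fix t assume "t \<in> elabels (SE F)"
  then obtain q i where "q \<in> F" "i < length (snd q)" "t = snd q ! i" unfolding elabels_def SE_def by auto
  thus "t \<in> goodlab" using F_good by simp
qed

lemma TSE_labels: "elabels (TSE F) \<subseteq> goodlab"
proof
  fix t assume "t \<in> elabels (TSE F)"
  then obtain q i where "q \<in> F" "i < length (snd q)" "t = snd q ! i" unfolding elabels_def TSE_def by auto
  thus "t \<in> goodlab" using F_good by simp
qed

lemma SE_ends: "(x, t, y) \<in> SE F \<Longrightarrow> x \<in> SV F \<and> y \<in> SV F"
proof -
  assume "(x, t, y) \<in> SE F"
  then obtain q i where q: "q \<in> F" "i < length (snd q)" "x = fst q ! i" "y = fst q ! Suc i" unfolding SE_def by auto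
  have "i < length (fst q)" "Suc i < length (fst q)" using F_len[OF q(1)] q(2) by auto
  hence "fst q ! i \<in> set (fst q)" "fst q ! Suc i \<in> set (fst q)" by (simp_all add: nth_mem)
  thus ?thesis using q unfolding SV_def by blast
qed

lemma TSV_SV: "(a, i) \<in> TSV F \<Longrightarrow> a \<in> SV F"
proof -
  assume "(a, i) \<in> TSV F"
  then obtain q where q: "q \<in> F" "i \<le> length (snd q)" "a = fst q ! i" unfolding TSV_def by auto
  have "i < length (fst q)" using F_len[OF q(1)] q(2) by auto
  hence "fst q ! i \<in> set (fst q)" by (simp add: nth_mem)
  thus ?thesis using q unfolding SV_def by blast
qed

lemma TSE_ends: "(x, t, y) \<in> TSE F \<Longrightarrow> x \<in> TSV F \<and> y \<in> TSV F"
proof -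
  assume "(x, t, y) \<in> TSE F"
  then obtain q i where q: "q \<in> F" "i < length (snd q)" "x = (fst q ! i, i)" "y = (fst q ! Suc i, Suc i)"
    unfolding TSE_def by auto
  have "i \<le> length (snd q)" "Suc i \<le> length (snd q)" using q(2) by auto
  thus ?thesis using q unfolding TSV_def by blast
qed

abbreviation "f2 \<equiv> (\<lambda>(a, i). (rperm E a, i))"

lemma inj_f2: "inj_on f2 (TSV F)"
proof (rule inj_onI)
  fix x y assume x: "x \<in> TSV F" and y: "y \<in> TSV F" and e: "f2 x = f2 y"
  obtain a i where xe: "x = (a, i)" by (cases x)
  obtain b j where ye: "y = (b, j)" by (cases y)
  have "a \<in> SV F" "b \<in> SV F" using TSV_SV x y xe ye by auto
  moreover have "rperm E a = rperm E b" "i = j" using e xe ye by auto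
  ultimately show "x = y" using inj_rperm_SV xe ye by (auto dest: inj_onD)
qed

lemma SV_img: "SV (rpath E ` F) = rperm E ` SV F"
  unfolding SV_def rpath_def by auto

lemma SE_img: "SE (rpath E ` F) = emap (rperm E) (rtr E) ` SE F"
proof
  show "SE (rpath E ` F) \<subseteq> emap (rperm E) (rtr E) ` SE F"
  proof
    fix e assume "e \<in> SE (rpath E ` F)"
    then obtain q i where q: "q \<in> F" "i < length (snd (rpath E q))" "e = (fst (rpath E q) ! i, snd (rpath E q) ! i, fst (rpath E q) ! Suc i)"
      unfolding SE_def by blast
    have l: "i < length (snd q)" "Suc i < length (fst q)" using q(2) F_len[OF q(1)] unfolding rpath_def by auto
    have "e = emap (rperm E) (rtr E) (fst q ! i, snd q ! i, fst q ! Suc i)" using q(3) l unfolding emap_def rpath_def by simp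
    moreover have "(fst q ! i, snd q ! i, fst q ! Suc i) \<in> SE F" using q(1) l unfolding SE_def by blast
    ultimately show "e \<in> emap (rperm E) (rtr E) ` SE F" by blast
  qed
  show "emap (rperm E) (rtr E) ` SE F \<subseteq> SE (rpath E ` F)"
  proof
    fix e assume "e \<in> emap (rperm E) (rtr E) ` SE F"
    then obtain q i where q: "q \<in> F" "i < length (snd q)" "e = emap (rperm E) (rtr E) (fst q ! i, snd q ! i, fst q ! Suc i)"
      unfolding SE_def by blast
    have l: "i < length (snd q)" "Suc i < length (fst q)" using q(2) F_len[OF q(1)] by auto
    have "e = (fst (rpath E q) ! i, snd (rpath E q) ! i, fst (rpath E q) ! Suc i)" using q(3) l unfolding emap_def rpath_def by simp
    moreover have "i < length (snd (rpath E q))" using l unfolding rpath_def by simp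
    ultimately show "e \<in> SE (rpath E ` F)" using q(1) unfolding SE_def by blast
  qed
qed

lemma TSV_img: "TSV (rpath E ` F) = f2 ` TSV F"
proof
  show "TSV (rpath E ` F) \<subseteq> f2 ` TSV F"
  proof
    fix x assume "x \<in> TSV (rpath E ` F)"
    then obtain q i where q: "q \<in> F" "i \<le> length (snd (rpath E q))" "x = (fst (rpath E q) ! i, i)"
      unfolding TSV_def by blast
    have l: "i \<le> length (snd q)" "i < length (fst q)" using q(2) F_len[OF q(1)] unfolding rpath_def by auto
    have "x = f2 (fst q ! i, i)" using q(3) l unfolding rpath_def by simp
    moreover have "(fst q ! i, i) \<in> TSV F" using q(1) l unfolding TSV_def by blast
    ultimately show "x \<in> f2 ` TSV F" by blast
  qed
  show "f2 ` TSV F \<subseteq> TSV (rpath E ` F)"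
  proof
    fix x assume "x \<in> f2 ` TSV F"
    then obtain q i where q: "q \<in> F" "i \<le> length (snd q)" "x = f2 (fst q ! i, i)"
      unfolding TSV_def by blast
    have l: "i \<le> length (snd q)" "i < length (fst q)" using q(2) F_len[OF q(1)] by auto
    have "x = (fst (rpath E q) ! i, i)" using q(3) l unfolding rpath_def by simp
    moreover have "i \<le> length (snd (rpath E q))" using l unfolding rpath_def by simp
    ultimately show "x \<in> TSV (rpath E ` F)" using q(1) unfolding TSV_def by blast
  qed
qed

lemma TSE_img: "TSE (rpath E ` F) = emap f2 (rtr E) ` TSE F"
proof
  show "TSE (rpath E ` F) \<subseteq> emap f2 (rtr E) ` TSE F"
  proof
    fix e assume "e \<in> TSE (rpath E ` F)"
    then obtain q i where q: "q \<in> F" "i < length (snd (rpath E q))"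
      "e = ((fst (rpath E q) ! i, i), snd (rpath E q) ! i, (fst (rpath E q) ! Suc i, Suc i))"
      unfolding TSE_def by blast
    have l: "i < length (snd q)" "Suc i < length (fst q)" using q(2) F_len[OF q(1)] unfolding rpath_def by auto
    have "e = emap f2 (rtr E) ((fst q ! i, i), snd q ! i, (fst q ! Suc i, Suc i))" using q(3) l unfolding emap_def rpath_def by simp
    moreover have "((fst q ! i, i), snd q ! i, (fst q ! Suc i, Suc i)) \<in> TSE F" using q(1) l unfolding TSE_def by blast
    ultimately show "e \<in> emap f2 (rtr E) ` TSE F" by blast
  qed
  show "emap f2 (rtr E) ` TSE F \<subseteq> TSE (rpath E ` F)"
  proof
    fix e assume "e \<in> emap f2 (rtr E) ` TSE F"
    then obtain q i where q: "q \<in> F" "i < length (snd q)" "e = emap f2 (rtr E) ((fst q ! i, i), snd q ! i, (fst q ! Suc i, Suc i))"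
      unfolding TSE_def by blast
    have l: "i < length (snd q)" "Suc i < length (fst q)" using q(2) F_len[OF q(1)] by auto
    have "e = ((fst (rpath E q) ! i, i), snd (rpath E q) ! i, (fst (rpath E q) ! Suc i, Suc i))" using q(3) l unfolding emap_def rpath_def by simp
    moreover have "i < length (snd (rpath E q))" using l unfolding rpath_def by simp
    ultimately show "e \<in> TSE (rpath E ` F)" using q(1) unfolding TSE_def by blast
  qed
qed

lemma iso_S: "lg_iso (SV F) (SE F) (SV (rpath E ` F)) (SE (rpath E ` F)) (rperm E) (rtr E)"
  unfolding SV_img SE_img
  by (rule lg_iso_image[OF inj_rperm_SV inj_on_subset[OF rtr_inj_good SE_labels]]) (use SE_ends in blast)

lemma iso_TS: "lg_iso (TSV F) (TSE F) (TSV (rpath E ` F)) (TSE (rpath E ` F)) f2 (rtr E)"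
  unfolding TSV_img TSE_img
  by (rule lg_iso_image[OF inj_f2 inj_on_subset[OF rtr_inj_good TSE_labels]]) (use TSE_ends in blast)

lemma inc_S: "bij_betw (pmap (rperm E) (rtr E))
          {p \<in> lpaths (SV F) (SE F). increasing R (snd p)}
          {p \<in> lpaths (SV (rpath E ` F)) (SE (rpath E ` F)). increasing (rorder E R) (snd p)}"
  unfolding SV_img SE_img
  by (rule lpaths_image[OF inj_rperm_SV inj_on_subset[OF rtr_inj_good SE_labels]])
     (use SE_ends rorder_iff SE_labels in blast)+

lemma inc_TS: "bij_betw (pmap f2 (rtr E))
          {p \<in> lpaths (TSV F) (TSE F). increasing R (snd p)}
          {p \<in> lpaths (TSV (rpath E ` F)) (TSE (rpath E ` F)). increasing (rorder E R) (snd p)}"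
  unfolding TSV_img TSE_img
  by (rule lpaths_image[OF inj_f2 inj_on_subset[OF rtr_inj_good TSE_labels]])
     (use TSE_ends rorder_iff TSE_labels in blast)+

lemma bij_F: "bij_betw (rpath E) F (rpath E ` F)"
  using rpath_inj by (simp add: inj_on_imp_bij_betw)

lemma inc_F: "bij_betw (rpath E) {p \<in> F. increasing R (snd p)} {p \<in> rpath E ` F. increasing (rorder E R) (snd p)}"
proof (rule bij_betw_restrict[OF bij_F])
  fix q assume q: "q \<in> F"
  have "increasing (rorder E R) (map (rtr E) (snd q)) \<longleftrightarrow> increasing R (snd q)"
    unfolding increasing_def using rorder_iff F_good[OF q] by auto
  thus "increasing R (snd q) \<longleftrightarrow> increasing (rorder E R) (snd (rpath E q))" unfolding rpath_def by simp
qed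

lemma flabels_img: "flabels (rpath E ` F) = rtr E ` flabels F"
  unfolding flabels_def rpath_def by auto

lemma flabels_good: "flabels F \<subseteq> goodlab"
proof
  fix t assume "t \<in> flabels F"
  then obtain q where q: "q \<in> F" "t \<in> set (snd q)" unfolding flabels_def by auto
  then obtain k where "k < length (snd q)" "t = snd q ! k" by (metis in_set_conv_nth)
  thus "t \<in> goodlab" using F_good[OF q(1)] by simp
qed

lemma tlex_rtr: "s \<in> goodlab \<Longrightarrow> t \<in> goodlab \<Longrightarrow> tlex s t \<Longrightarrow> tlex (rtr E s) (rtr E t)"
proof -
  assume s: "s \<in> goodlab" and t: "t \<in> goodlab" and l: "tlex s t"
  have m: "fst s \<in> E" "snd s \<in> E" "fst t \<in> E" "snd t \<in> E" using s t unfolding goodlab_def lset_def by auto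
  show ?thesis using l rk_less_iff[OF finE m(1) m(3)] rk_less_iff[OF finE m(2) m(4)] unfolding tlex_def rtr_def by auto
qed

lemma iso_F: "flip_iso n (card E) h F (rpath E ` F) (rperm E) (rtr E)"
proof -
  have "bij_betw (rperm E) (fverts F) (fverts (rpath E ` F))"
    using iso_S unfolding lg_iso_def fverts_def SV_def by simp
  moreover have "bij_betw (rtr E) (flabels F) (flabels (rpath E ` F))"
    unfolding flabels_img using inj_on_subset[OF rtr_inj_good flabels_good] by (simp add: inj_on_imp_bij_betw)
  moreover have "pmap (rperm E) (rtr E) = rpath E" unfolding pmap_def rpath_def by (rule ext) simp
  moreover have "\<forall>p\<in>F. \<forall>i\<in>{1..h - 1}. rpath E (flip n i p) = flip (card E) i (rpath E p)"
    using rpath_flip by auto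
  moreover have "\<forall>s\<in>flabels F. \<forall>t\<in>flabels F. tlex s t \<longrightarrow> tlex (rtr E s) (rtr E t)"
    using tlex_rtr flabels_good by blast
  ultimately show ?thesis unfolding flip_iso_def using bij_F by simp
qed

end


theorem lemma6p9:
  fixes n h :: nat and F :: "bpath set"
  assumes "is_flipclass n h F"
  defines "E \<equiv> Eset F"
  defines "m \<equiv> card E"
  defines "F' \<equiv> rpath E ` F"
  shows
    \<comment> \<open>(1)\<close>
    "is_flipclass m h F' \<and>
     bij_betw (rpath E) F F' \<and>
     (\<forall>p\<in>F. \<forall>i\<in>{1..h - 1}. rpath E (flip n i p) = flip m i (rpath E p)) \<and>
     (\<forall>p\<in>F. \<forall>i\<in>{1..h}. rtr E (snd p ! (i - 1)) = snd (rpath E p) ! (i - 1)) \<and>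
    \<comment> \<open>(2)\<close>
     lg_iso (SV F) (SE F) (SV F') (SE F') (rperm E) (rtr E) \<and>
     lg_iso (TSV F) (TSE F) (TSV F') (TSE F') (\<lambda>(a, i). (rperm E a, i)) (rtr E) \<and>
    \<comment> \<open>(3)\<close>
     (\<forall>R. reflection_ordering n R \<longrightarrow>
        bij_betw (rpath E) {p \<in> F. increasing R (snd p)} {p \<in> F'. increasing (rorder E R) (snd p)} \<and>
        bij_betw (pmap (rperm E) (rtr E))
          {p \<in> lpaths (SV F) (SE F). increasing R (snd p)}
          {p \<in> lpaths (SV F') (SE F'). increasing (rorder E R) (snd p)} \<and>
        bij_betw (pmap (\<lambda>(a, i). (rperm E a, i)) (rtr E))
          {p \<in> lpaths (TSV F) (TSE F). increasing R (snd p)}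
          {p \<in> lpaths (TSV F') (TSE F'). increasing (rorder E R) (snd p)}) \<and>
    \<comment> \<open>(4)\<close>
     flip_iso n m h F F' (rperm E) (rtr E)"
proof -
  obtain u v p0 where p0: "p0 \<in> bpaths n h u v" and Fd: "F = {q. (p0, q) \<in> (flipstep n h u v)\<^sup>*}"
    using assms(1) unfolding is_flipclass_def by blast
  interpret I: FC n h u v p0 F using p0 Fd by unfold_locales
  have EE: "E = I.E" using E_def I.E_eq by simp
  have c3: "\<forall>p\<in>F. \<forall>i\<in>{1..h - 1}. rpath I.E (flip n i p) = flip (card I.E) i (rpath I.E p)"
    using I.rpath_flip by auto
  have c4: "\<forall>p\<in>F. \<forall>i\<in>{1..h}. rtr I.E (snd p ! (i - 1)) = snd (rpath I.E p) ! (i - 1)"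
  proof (intro ballI)
    fix p i assume p: "p \<in> F" and i: "i \<in> {1..h}"
    have "i - 1 < length (snd p)" using I.F_len[OF p] i by auto
    thus "rtr I.E (snd p ! (i - 1)) = snd (rpath I.E p) ! (i - 1)" unfolding rpath_def by simp
  qed
  show ?thesis unfolding m_def F'_def EE
    using I.is_fc I.bij_F c3 c4 I.iso_S I.iso_TS I.inc_F I.inc_S I.inc_TS I.iso_F by blast
qed


end
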